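(* Let $G$ be a finite group and $\varphi\colon T\to S$ a morphism of $G$-Tambara functors. The induced map $\varphi^a\colon\operatorname{Spec}_{\mathbf{Nak}}(S)\to\operatorname{Spec}_{\mathbf{Nak}}(T)$ sends each prime $Q$ of $S$ to its levelwise preimage $\varphi^{-1}(Q)$, where $\varphi^{-1}(Q)(G/H)=\varphi_H^{-1}(Q(G/H))$.
   Context: All rings are commutative with unit. A $G$-Tambara functor consists of commutative rings $T(G/H)$ for subgroups $H\le G$ with restriction ring maps, additive transfer maps, multiplicative norm maps and conjugation isomorphisms satisfying the standard Tambara axioms (Hill–Mazur); a morphism $\varphi\colon T\to S$ is a family of ring maps $\varphi_H$ commuting with all structure maps. A Tambara ideal is a family of ring ideals closed under restriction, transfer, norm and conjugation; proper if $1\notin I(G/G)$. Products of Tambara ideals are generated by levelwise products; the radical $\sqrt I$ has $\sqrt I(G/H)=\{x\mid\langle x\rangle^n\subseteq I\text{ for some }n\ge1\}$, $\langle x\rangle$ the Tambara ideal generated by $x$. A proper ideal $P$ is prime if $IJ\subseteq P$ implies $I\subseteq P$ or $J\subseteq P$. $\operatorname{Spec}_{\mathbf{Nak}}(T)$ is the set of primes with subbasic closed sets $V_H(x)=\{P\mid x\in P(G/H)\}$. $\mathrm{RadId}_G(T)$ is the frame of radical Tambara ideals (inclusion order; joins $\sqrt{\sum I_\lambda}$); each prime $P$ corresponds to the frame point $p_P\colon\mathrm{RadId}_G(T)\to\{0,1\}$ with $p_P(I)=0$ iff $I\subseteq P$, and conversely a point $p$ corresponds to the prime $\bigvee\{I\mid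 p(I)=0\}$. For a Tambara ideal $I$ of $T$, $\varphi_*(I)$ is the Tambara ideal of $S$ generated by the sets $\varphi_H(I(G/H))$, and $\widetilde\varphi(I)=\sqrt{\varphi_*(I)}$ defines a frame homomorphism $\mathrm{RadId}_G(T)\to\mathrm{RadId}_G(S)$. The map $\varphi^a$ sends $Q$ to the prime of $T$ corresponding to the point $p_Q\circ\widetilde\varphi$. *)

theory Defs
  imports "HOL-Algebra.Algebra"
begin

(* ------------------------------------------------------------------------
   G-Tambara functors in subgroup ("Hill--Mazur") form.
   G is a HOL-Algebra group; the level T(G/H) is indexed by the subgroup H.
   All levels share the element type 'a (this loses no generality).
     tlev T H        : the commutative ring T(G/H)
     tres T H K      : restriction  T(G/H) -> T(G/K)      (K <= H)
     ttr  T K H      : transfer     T(G/K) -> T(G/H)      (K <= H)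
     tnm  T K H      : norm         T(G/K) -> T(G/H)      (K <= H)
     tcj  T g H      : conjugation  T(G/H) -> T(G/gHg^-1)
   ------------------------------------------------------------------------ *)

record ('g, 'a) tambara =
  tlev :: "'g set \<Rightarrow> 'a ring"
  tres :: "'g set \<Rightarrow> 'g set \<Rightarrow> 'a \<Rightarrow> 'a"
  ttr  :: "'g set \<Rightarrow> 'g set \<Rightarrow> 'a \<Rightarrow> 'a"
  tnm  :: "'g set \<Rightarrow> 'g set \<Rightarrow> 'a \<Rightarrow> 'a"
  tcj  :: "'g \<Rightarrow> 'g set \<Rightarrow> 'a \<Rightarrow> 'a"

definition conjs :: "('g, 'm) monoid_scheme \<Rightarrow> 'g \<Rightarrow> 'g set \<Rightarrow> 'g set" where
  "conjs G g H = (\<lambda>h. g \<otimes>\<^bsub>G\<^esub> h \<otimes>\<^bsub>G\<^esub> inv\<^bsub>G\<^esub> g) ` H"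

definition lcos :: "('g, 'm) monoid_scheme \<Rightarrow> 'g \<Rightarrow> 'g set \<Rightarrow> 'g set" where
  "lcos G h C = (\<lambda>c. h \<otimes>\<^bsub>G\<^esub> c) ` C"

(* H/K as a set of left cosets *)
definition cosetsH :: "('g, 'm) monoid_scheme \<Rightarrow> 'g set \<Rightarrow> 'g set \<Rightarrow> 'g set set" where
  "cosetsH G H K = {lcos G h K | h. h \<in> H}"

(* double coset L h K and the set L\H/K *)
definition dcos :: "('g, 'm) monoid_scheme \<Rightarrow> 'g set \<Rightarrow> 'g \<Rightarrow> 'g set \<Rightarrow> 'g set" where
  "dcos G L h K = {l \<otimes>\<^bsub>G\<^esub> h \<otimes>\<^bsub>G\<^esub> k | l k. l \<in> L \<and> k \<in> K}"

definition dcosets :: "('g, 'm) monoid_scheme \<Rightarrow> 'g set \<Rightarrow> 'g set \<Rightarrow> 'g set \<Rightarrow> 'g set set" where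
  "dcosets G L H K = {dcos G L h K | h. h \<in> H}"

definition rep :: "'x set \<Rightarrow> 'x" where
  "rep D = (SOME x. x \<in> D)"

definition sact :: "('g, 'm) monoid_scheme \<Rightarrow> 'g \<Rightarrow> 'g set set \<Rightarrow> 'g set set" where
  "sact G h A = lcos G h ` A"

(* sections s : H/K -> H/L of the projection H/L -> H/K (L <= K <= H),
   extended by {} outside H/K, and the conjugation action on them *)
definition sections :: "('g, 'm) monoid_scheme \<Rightarrow> 'g set \<Rightarrow> 'g set \<Rightarrow> 'g set \<Rightarrow> ('g set \<Rightarrow> 'g set) set" where
  "sections G H K L = {s. (\<forall>C \<in> cosetsH G H K. s C \<in> cosetsH G H L \<and> s C \<subseteq> C)
                         \<and> (\<forall>C. C \<notin> cosetsH G H K \<longrightarrow> s C = {})}"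

definition secact :: "('g, 'm) monoid_scheme \<Rightarrow> 'g set \<Rightarrow> 'g set \<Rightarrow> 'g \<Rightarrow> ('g set \<Rightarrow> 'g set) \<Rightarrow> ('g set \<Rightarrow> 'g set)" where
  "secact G H K h s = (\<lambda>C. if C \<in> cosetsH G H K
                           then lcos G h (s (lcos G (inv\<^bsub>G\<^esub> h) C)) else {})"

definition mackey_tr_rhs :: "('g, 'm) monoid_scheme \<Rightarrow> ('g, 'a) tambara \<Rightarrow> 'g set \<Rightarrow> 'g set \<Rightarrow> 'g set \<Rightarrow> 'a \<Rightarrow> 'a" where
  "mackey_tr_rhs G T H L K a =
     finsum (tlev T L)
       (\<lambda>D. let g = rep D in
          ttr T (L \<inter> conjs G g K) L
            (tres T (conjs G g K) (L \<inter> conjs G g K) (tcj T g K a)))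
       (dcosets G L H K)"

definition mackey_nm_rhs :: "('g, 'm) monoid_scheme \<Rightarrow> ('g, 'a) tambara \<Rightarrow> 'g set \<Rightarrow> 'g set \<Rightarrow> 'g set \<Rightarrow> 'a \<Rightarrow> 'a" where
  "mackey_nm_rhs G T H L K a =
     finprod (tlev T L)
       (\<lambda>D. let g = rep D in
          tnm T (L \<inter> conjs G g K) L
            (tres T (conjs G g K) (L \<inter> conjs G g K) (tcj T g K a)))
       (dcosets G L H K)"

(* Tambara reciprocity for the norm of a sum (exponential diagram for the
   fold map H/K + H/K -> H/K):
   N_K^H(a+b) = sum over H-orbits [A] of subsets A of H/K of
     tr^H_{H_A} prod_{h in H_A\H/K} N^{H_A}_{H_A cap hKh^-1}
        res^{hKh^-1}_{H_A cap hKh^-1} c_h (if hK in A then b else a)   *)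
definition nm_sum_rhs :: "('g, 'm) monoid_scheme \<Rightarrow> ('g, 'a) tambara \<Rightarrow> 'g set \<Rightarrow> 'g set \<Rightarrow> 'a \<Rightarrow> 'a \<Rightarrow> 'a" where
  "nm_sum_rhs G T H K a b =
     finsum (tlev T H)
       (\<lambda>Orb. let A = rep Orb; HA = {h \<in> H. sact G h A = A} in
          ttr T HA H
            (finprod (tlev T HA)
               (\<lambda>D. let h = rep D in
                  tnm T (HA \<inter> conjs G h K) HA
                    (tres T (conjs G h K) (HA \<inter> conjs G h K)
                       (tcj T h K (if lcos G h K \<in> A then b else a))))
               (dcosets G HA H K)))
       {{sact G h A | h. h \<in> H} | A. A \<subseteq> cosetsH G H K}"

(* Tambara reciprocity for the norm of a transfer (exponential diagram for
   H/L -> H/K -> H/H):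
   N_K^H tr_L^K(a) = sum over H-orbits [s] of sections s of H/L -> H/K of
     tr^H_{H_s} prod_{h in H_s\H/K} N^{H_s}_{H_s cap hKh^-1}
        res^{h'Lh'^-1}_{H_s cap hKh^-1} c_{h'} a,   where s(hK) = h'L   *)
definition nm_tr_rhs :: "('g, 'm) monoid_scheme \<Rightarrow> ('g, 'a) tambara \<Rightarrow> 'g set \<Rightarrow> 'g set \<Rightarrow> 'g set \<Rightarrow> 'a \<Rightarrow> 'a" where
  "nm_tr_rhs G T H K L a =
     finsum (tlev T H)
       (\<lambda>Orb. let s = rep Orb; Hs = {h \<in> H. secact G H K h s = s} in
          ttr T Hs H
            (finprod (tlev T Hs)
               (\<lambda>D. let h = rep D; h' = rep (s (lcos G h K)) in
                  tnm T (Hs \<inter> conjs G h K) Hs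
                    (tres T (conjs G h' L) (Hs \<inter> conjs G h K) (tcj T h' L a)))
               (dcosets G Hs H K)))
       {{secact G H K h s | h. h \<in> H} | s. s \<in> sections G H K L}"

definition tambara :: "('g, 'm) monoid_scheme \<Rightarrow> ('g, 'a) tambara \<Rightarrow> bool" where
  "tambara G T \<longleftrightarrow>
    (\<forall>H. subgroup H G \<longrightarrow> cring (tlev T H)) \<and>
    (\<forall>H K. subgroup H G \<longrightarrow> subgroup K G \<longrightarrow> K \<subseteq> H \<longrightarrow>
        tres T H K \<in> ring_hom (tlev T H) (tlev T K) \<and>
        ttr T K H \<in> hom (add_monoid (tlev T K)) (add_monoid (tlev T H)) \<and>
        tnm T K H \<in> hom (tlev T K) (tlev T H) \<and>
        tnm T K H \<one>\<^bsub>tlev T K\<^esub> = \<one>\<^bsub>tlev T H\<^esub> \<and>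
        tnm T K H \<zero>\<^bsub>tlev T K\<^esub> = \<zero>\<^bsub>tlev T H\<^esub>) \<and>
    (\<forall>g \<in> carrier G. \<forall>H. subgroup H G \<longrightarrow>
        tcj T g H \<in> ring_hom (tlev T H) (tlev T (conjs G g H))) \<and>
    \<comment> \<open>identities and functoriality\<close>
    (\<forall>H. subgroup H G \<longrightarrow> (\<forall>x \<in> carrier (tlev T H).
        tres T H H x = x \<and> ttr T H H x = x \<and> tnm T H H x = x \<and>
        (\<forall>h \<in> H. tcj T h H x = x))) \<and>
    (\<forall>H K L. subgroup H G \<longrightarrow> subgroup K G \<longrightarrow> subgroup L G \<longrightarrow> L \<subseteq> K \<longrightarrow> K \<subseteq> H \<longrightarrow>
        (\<forall>x \<in> carrier (tlev T H). tres T K L (tres T H K x) = tres T H L x) \<and>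
        (\<forall>x \<in> carrier (tlev T L). ttr T K H (ttr T L K x) = ttr T L H x \<and>
                                     tnm T K H (tnm T L K x) = tnm T L H x)) \<and>
    (\<forall>H. subgroup H G \<longrightarrow> (\<forall>g \<in> carrier G. \<forall>g' \<in> carrier G. \<forall>x \<in> carrier (tlev T H).
        tcj T g (conjs G g' H) (tcj T g' H x) = tcj T (g \<otimes>\<^bsub>G\<^esub> g') H x)) \<and>
    \<comment> \<open>compatibility of conjugation with restriction, transfer, norm\<close>
    (\<forall>H K. subgroup H G \<longrightarrow> subgroup K G \<longrightarrow> K \<subseteq> H \<longrightarrow> (\<forall>g \<in> carrier G.
        (\<forall>x \<in> carrier (tlev T H).
           tcj T g K (tres T H K x) = tres T (conjs G g H) (conjs G g K) (tcj T g H x)) \<and>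
        (\<forall>x \<in> carrier (tlev T K).
           tcj T g H (ttr T K H x) = ttr T (conjs G g K) (conjs G g H) (tcj T g K x) \<and>
           tcj T g H (tnm T K H x) = tnm T (conjs G g K) (conjs G g H) (tcj T g K x)))) \<and>
    \<comment> \<open>Frobenius reciprocity\<close>
    (\<forall>H K. subgroup H G \<longrightarrow> subgroup K G \<longrightarrow> K \<subseteq> H \<longrightarrow>
        (\<forall>a \<in> carrier (tlev T K). \<forall>b \<in> carrier (tlev T H).
           ttr T K H (a \<otimes>\<^bsub>tlev T K\<^esub> tres T H K b) = ttr T K H a \<otimes>\<^bsub>tlev T H\<^esub> b)) \<and>
    \<comment> \<open>additive and multiplicative double coset formulas\<close>
    (\<forall>H K L. subgroup H G \<longrightarrow> subgroup K G \<longrightarrow> subgroup L G \<longrightarrow> K \<subseteq> H \<longrightarrow> L \<subseteq> H \<longrightarrow>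
        (\<forall>a \<in> carrier (tlev T K).
           tres T H L (ttr T K H a) = mackey_tr_rhs G T H L K a \<and>
           tres T H L (tnm T K H a) = mackey_nm_rhs G T H L K a)) \<and>
    \<comment> \<open>Tambara reciprocity: norms of sums and of transfers\<close>
    (\<forall>H K. subgroup H G \<longrightarrow> subgroup K G \<longrightarrow> K \<subseteq> H \<longrightarrow>
        (\<forall>a \<in> carrier (tlev T K). \<forall>b \<in> carrier (tlev T K).
           tnm T K H (a \<oplus>\<^bsub>tlev T K\<^esub> b) = nm_sum_rhs G T H K a b)) \<and>
    (\<forall>H K L. subgroup H G \<longrightarrow> subgroup K G \<longrightarrow> subgroup L G \<longrightarrow> L \<subseteq> K \<longrightarrow> K \<subseteq> H \<longrightarrow>
        (\<forall>a \<in> carrier (tlev T L).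
           tnm T K H (ttr T L K a) = nm_tr_rhs G T H K L a))"

definition tmor :: "('g, 'm) monoid_scheme \<Rightarrow> ('g, 'a) tambara \<Rightarrow> ('g, 'b) tambara \<Rightarrow> ('g set \<Rightarrow> 'a \<Rightarrow> 'b) \<Rightarrow> bool" where
  "tmor G T S \<phi> \<longleftrightarrow>
    (\<forall>H. subgroup H G \<longrightarrow> \<phi> H \<in> ring_hom (tlev T H) (tlev S H)) \<and>
    (\<forall>H K. subgroup H G \<longrightarrow> subgroup K G \<longrightarrow> K \<subseteq> H \<longrightarrow>
        (\<forall>x \<in> carrier (tlev T H). \<phi> K (tres T H K x) = tres S H K (\<phi> H x)) \<and>
        (\<forall>x \<in> carrier (tlev T K). \<phi> H (ttr T K H x) = ttr S K H (\<phi> K x) \<and>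
                                     \<phi> H (tnm T K H x) = tnm S K H (\<phi> K x))) \<and>
    (\<forall>H. subgroup H G \<longrightarrow> (\<forall>g \<in> carrier G. \<forall>x \<in> carrier (tlev T H).
        \<phi> (conjs G g H) (tcj T g H x) = tcj S g H (\<phi> H x)))"

definition tideal :: "('g, 'm) monoid_scheme \<Rightarrow> ('g, 'a) tambara \<Rightarrow> ('g set \<Rightarrow> 'a set) \<Rightarrow> bool" where
  "tideal G T I \<longleftrightarrow>
    (\<forall>H. \<not> subgroup H G \<longrightarrow> I H = {}) \<and>
    (\<forall>H. subgroup H G \<longrightarrow> ideal (I H) (tlev T H)) \<and>
    (\<forall>H K. subgroup H G \<longrightarrow> subgroup K G \<longrightarrow> K \<subseteq> H \<longrightarrow>
        tres T H K ` I H \<subseteq> I K \<and> ttr T K H ` I K \<subseteq> I H \<and> tnm T K H ` I K \<subseteq> I H) \<and>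
    (\<forall>H. subgroup H G \<longrightarrow> (\<forall>g \<in> carrier G. tcj T g H ` I H \<subseteq> I (conjs G g H)))"

definition tgen :: "('g, 'm) monoid_scheme \<Rightarrow> ('g, 'a) tambara \<Rightarrow> ('g set \<Rightarrow> 'a set) \<Rightarrow> ('g set \<Rightarrow> 'a set)" where
  "tgen G T Xs = (\<lambda>H. if subgroup H G then
       (\<Inter>J \<in> {J. tideal G T J \<and> (\<forall>H'. subgroup H' G \<longrightarrow> Xs H' \<subseteq> J H')}. J H) else {})"

definition tgen1 :: "('g, 'm) monoid_scheme \<Rightarrow> ('g, 'a) tambara \<Rightarrow> 'g set \<Rightarrow> 'a \<Rightarrow> ('g set \<Rightarrow> 'a set)" where
  "tgen1 G T H x = tgen G T (\<lambda>H'. if H' = H then {x} else {})"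

definition tunit :: "('g, 'm) monoid_scheme \<Rightarrow> ('g, 'a) tambara \<Rightarrow> ('g set \<Rightarrow> 'a set)" where
  "tunit G T = (\<lambda>H. if subgroup H G then carrier (tlev T H) else {})"

definition tprod :: "('g, 'm) monoid_scheme \<Rightarrow> ('g, 'a) tambara \<Rightarrow> ('g set \<Rightarrow> 'a set) \<Rightarrow> ('g set \<Rightarrow> 'a set) \<Rightarrow> ('g set \<Rightarrow> 'a set)" where
  "tprod G T I J = tgen G T (\<lambda>H. {x \<otimes>\<^bsub>tlev T H\<^esub> y | x y. x \<in> I H \<and> y \<in> J H})"

primrec tpow :: "('g, 'm) monoid_scheme \<Rightarrow> ('g, 'a) tambara \<Rightarrow> ('g set \<Rightarrow> 'a set) \<Rightarrow> nat \<Rightarrow> ('g set \<Rightarrow> 'a set)" where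
  "tpow G T I 0 = tunit G T"
| "tpow G T I (Suc n) = tprod G T (tpow G T I n) I"

definition trad :: "('g, 'm) monoid_scheme \<Rightarrow> ('g, 'a) tambara \<Rightarrow> ('g set \<Rightarrow> 'a set) \<Rightarrow> ('g set \<Rightarrow> 'a set)" where
  "trad G T I = (\<lambda>H. if subgroup H G then
       {x \<in> carrier (tlev T H). \<exists>n\<ge>1. tpow G T (tgen1 G T H x) n \<le> I} else {})"

definition tprime :: "('g, 'm) monoid_scheme \<Rightarrow> ('g, 'a) tambara \<Rightarrow> ('g set \<Rightarrow> 'a set) \<Rightarrow> bool" where
  "tprime G T P \<longleftrightarrow> tideal G T P \<and> \<one>\<^bsub>tlev T (carrier G)\<^esub> \<notin> P (carrier G) \<and>
     (\<forall>I J. tideal G T I \<longrightarrow> tideal G T J \<longrightarrow> tprod G T I J \<le> P \<longrightarrow> I \<le> P \<or> J \<le> P)"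

definition radid :: "('g, 'm) monoid_scheme \<Rightarrow> ('g, 'a) tambara \<Rightarrow> ('g set \<Rightarrow> 'a set) set" where
  "radid G T = {I. tideal G T I \<and> trad G T I = I}"

definition tjoin :: "('g, 'm) monoid_scheme \<Rightarrow> ('g, 'a) tambara \<Rightarrow> ('g set \<Rightarrow> 'a set) set \<Rightarrow> ('g set \<Rightarrow> 'a set)" where
  "tjoin G T \<I> = trad G T (tgen G T (\<lambda>H. \<Union>I\<in>\<I>. I H))"

definition tpush :: "('g, 'm) monoid_scheme \<Rightarrow> ('g, 'b) tambara \<Rightarrow> ('g set \<Rightarrow> 'a \<Rightarrow> 'b) \<Rightarrow> ('g set \<Rightarrow> 'a set) \<Rightarrow> ('g set \<Rightarrow> 'b set)" where
  "tpush G S \<phi> I = tgen G S (\<lambda>H. \<phi> H ` I H)"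

definition ttilde :: "('g, 'm) monoid_scheme \<Rightarrow> ('g, 'b) tambara \<Rightarrow> ('g set \<Rightarrow> 'a \<Rightarrow> 'b) \<Rightarrow> ('g set \<Rightarrow> 'a set) \<Rightarrow> ('g set \<Rightarrow> 'b set)" where
  "ttilde G S \<phi> I = trad G S (tpush G S \<phi> I)"

definition fpoint :: "('g set \<Rightarrow> 'a set) \<Rightarrow> ('g set \<Rightarrow> 'a set) \<Rightarrow> nat" where
  "fpoint P I = (if I \<le> P then 0 else 1)"

definition prime_of_point :: "('g, 'm) monoid_scheme \<Rightarrow> ('g, 'a) tambara \<Rightarrow> (('g set \<Rightarrow> 'a set) \<Rightarrow> nat) \<Rightarrow> ('g set \<Rightarrow> 'a set)" where
  "prime_of_point G T p = tjoin G T {I \<in> radid G T. p I = 0}"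

(* phi^a(Q) : prime of T corresponding to p_Q o phi~ *)
definition spec_map :: "('g, 'm) monoid_scheme \<Rightarrow> ('g, 'a) tambara \<Rightarrow> ('g, 'b) tambara \<Rightarrow> ('g set \<Rightarrow> 'a \<Rightarrow> 'b) \<Rightarrow> ('g set \<Rightarrow> 'b set) \<Rightarrow> ('g set \<Rightarrow> 'a set)" where
  "spec_map G T S \<phi> Q = prime_of_point G T (\<lambda>I. fpoint Q (ttilde G S \<phi> I))"

end

theory Submission
  imports Defs
begin

context group begin

lemma conjs_eq_coset: "conjs G g H = g <# H #> inv g"
  unfolding conjs_def l_coset_def r_coset_def by auto

lemma conjs_subgroup:
  assumes g: "g \<in> carrier G" and H: "subgroup H G"
  shows "subgroup (conjs G g H) G"
  using subgroup_conjugation_is_surj2[OF g H] conjs_eq_coset by simp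

lemma conjs_mono: "K \<subseteq> H \<Longrightarrow> conjs G g K \<subseteq> conjs G g H"
  unfolding conjs_def by (rule image_mono)

lemma conjs_in:
  assumes "subgroup M G" "h \<in> M" "K \<subseteq> M"
  shows "conjs G h K \<subseteq> M"
proof
  fix x assume "x \<in> conjs G h K"
  then obtain k where k: "k \<in> K" "x = h \<otimes> k \<otimes> inv h" unfolding conjs_def by blast
  have "k \<in> M" using k(1) assms(3) by (rule subsetD[rotated])
  then have "h \<otimes> k \<in> M" by (rule subgroup.m_closed[OF assms(1) assms(2)])
  moreover have "inv h \<in> M" by (rule subgroup.m_inv_closed[OF assms(1) assms(2)])
  ultimately show "x \<in> M" unfolding k(2) by (rule subgroup.m_closed[OF assms(1)])
qed

lemma lcos_mult:
  assumes "a \<in> carrier G" "b \<in> carrier G" "C \<subseteq> carrier G"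
  shows "lcos G a (lcos G b C) = lcos G (a \<otimes> b) C"
proof -
  have "\<And>c. c \<in> C \<Longrightarrow> a \<otimes> (b \<otimes> c) = a \<otimes> b \<otimes> c"
    using assms by (simp add: m_assoc subsetD)
  then show ?thesis unfolding lcos_def image_image by (rule image_cong[OF refl])
qed

lemma lcos_one: "C \<subseteq> carrier G \<Longrightarrow> lcos G \<one> C = C"
proof -
  assume C: "C \<subseteq> carrier G"
  have "\<And>c. c \<in> C \<Longrightarrow> \<one> \<otimes> c = id c" using C by auto
  then have "lcos G \<one> C = id ` C" unfolding lcos_def by (rule image_cong[OF refl])
  then show ?thesis by simp
qed

lemma lcos_carrier: "a \<in> carrier G \<Longrightarrow> C \<subseteq> carrier G \<Longrightarrow> lcos G a C \<subseteq> carrier G"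
  unfolding lcos_def by auto

lemma lcos_self: "subgroup K G \<Longrightarrow> a \<in> carrier G \<Longrightarrow> a \<in> lcos G a K"
proof -
  assume K: "subgroup K G" and a: "a \<in> carrier G"
  have "a = a \<otimes> \<one>" using a by simp
  moreover have "\<one> \<in> K" by (rule subgroup.one_closed[OF K])
  ultimately show ?thesis unfolding lcos_def by (rule image_eqI)
qed

lemma lcos_absorb:
  assumes K: "subgroup K G" and a: "a \<in> carrier G" and k: "k \<in> K"
  shows "lcos G (a \<otimes> k) K = lcos G a K"
proof -
  have KC: "K \<subseteq> carrier G" by (rule subgroup.subset[OF K])
  have kc: "k \<in> carrier G" using k KC by (rule subsetD[rotated])
  have "lcos G k K = K"
  proof
    show "lcos G k K \<subseteq> K"
    proof
      fix y assume "y \<in> lcos G k K"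
      then obtain x where x: "x \<in> K" "y = k \<otimes> x" unfolding lcos_def by (rule imageE)
      show "y \<in> K" unfolding x(2) by (rule subgroup.m_closed[OF K k x(1)])
    qed
    show "K \<subseteq> lcos G k K"
    proof
      fix x assume x: "x \<in> K"
      have xc: "x \<in> carrier G" using x KC by (rule subsetD[rotated])
      have "inv k \<in> K" by (rule subgroup.m_inv_closed[OF K k])
      then have "inv k \<otimes> x \<in> K" by (rule subgroup.m_closed[OF K _ x])
      moreover have "x = k \<otimes> (inv k \<otimes> x)" using kc xc by (simp add: m_assoc[symmetric])
      ultimately show "x \<in> lcos G k K" unfolding lcos_def by (rule rev_image_eqI)
    qed
  qed
  then show ?thesis using lcos_mult[OF a kc KC] by simp
qed

lemma lcos_mem_eq:
  assumes K: "subgroup K G" and a: "a \<in> carrier G" and b: "b \<in> lcos G a K"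
  shows "lcos G b K = lcos G a K"
proof -
  obtain k where k: "k \<in> K" "b = a \<otimes> k" using b unfolding lcos_def by (rule imageE)
  show ?thesis unfolding k(2) by (rule lcos_absorb[OF K a k(1)])
qed

lemma lcos_fix_conj:
  assumes K: "subgroup K G" and z: "z \<in> carrier G" and x: "x \<in> carrier G"
    and e: "lcos G (x \<otimes> z) K = lcos G z K"
  shows "x \<in> conjs G z K"
proof -
  have xz: "x \<otimes> z \<in> carrier G" using x z by simp
  have "x \<otimes> z \<in> lcos G z K" using lcos_self[OF K xz] e by simp
  then obtain k where k: "k \<in> K" "x \<otimes> z = z \<otimes> k" unfolding lcos_def by (rule imageE)
  have kc: "k \<in> carrier G" using k(1) subgroup.subset[OF K] by (rule subsetD[rotated])
  have "x = z \<otimes> k \<otimes> inv z"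
    using inv_solve_right[of x "z \<otimes> k" z] k(2) x z kc by simp
  then show ?thesis unfolding conjs_def using k(1) by (rule image_eqI)
qed

end


locale tamb = group G for G :: "'g monoid" (structure) +
  fixes T :: "('g, 'a) tambara"
  assumes is_tamb: "tambara G T" and fin: "finite (carrier G)"
begin

lemmas tD = is_tamb[unfolded tambara_def]
lemmas t1 = tD[THEN conjunct1]
lemmas t2 = tD[THEN conjunct2, THEN conjunct1]
lemmas t3 = tD[THEN conjunct2, THEN conjunct2, THEN conjunct1]
lemmas t4 = tD[THEN conjunct2, THEN conjunct2, THEN conjunct2, THEN conjunct1]
lemmas t5 = tD[THEN conjunct2, THEN conjunct2, THEN conjunct2, THEN conjunct2, THEN conjunct1]
lemmas t7 = tD[THEN conjunct2, THEN conjunct2, THEN conjunct2, THEN conjunct2, THEN conjunct2, THEN conjunct2, THEN conjunct1]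
lemmas t8 = tD[THEN conjunct2, THEN conjunct2, THEN conjunct2, THEN conjunct2, THEN conjunct2, THEN conjunct2, THEN conjunct2, THEN conjunct1]
lemmas t9 = tD[THEN conjunct2, THEN conjunct2, THEN conjunct2, THEN conjunct2, THEN conjunct2, THEN conjunct2, THEN conjunct2, THEN conjunct2, THEN conjunct1]
lemmas t10 = tD[THEN conjunct2, THEN conjunct2, THEN conjunct2, THEN conjunct2, THEN conjunct2, THEN conjunct2, THEN conjunct2, THEN conjunct2, THEN conjunct2, THEN conjunct1]
lemmas t11 = tD[THEN conjunct2, THEN conjunct2, THEN conjunct2, THEN conjunct2, THEN conjunct2, THEN conjunct2, THEN conjunct2, THEN conjunct2, THEN conjunct2, THEN conjunct2]

lemma lev_cring: "subgroup H G \<Longrightarrow> cring (tlev T H)"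
  using t1 by blast

lemma lev_ring: "subgroup H G \<Longrightarrow> ring (tlev T H)"
  using lev_cring cring.axioms(1) by blast

lemma res_hom: "subgroup H G \<Longrightarrow> subgroup K G \<Longrightarrow> K \<subseteq> H \<Longrightarrow> tres T H K \<in> ring_hom (tlev T H) (tlev T K)"
  using t2 by blast

lemma tr_hom: "subgroup H G \<Longrightarrow> subgroup K G \<Longrightarrow> K \<subseteq> H \<Longrightarrow> ttr T K H \<in> hom (add_monoid (tlev T K)) (add_monoid (tlev T H))"
  using t2 by blast

lemma nm_hom: "subgroup H G \<Longrightarrow> subgroup K G \<Longrightarrow> K \<subseteq> H \<Longrightarrow> tnm T K H \<in> hom (tlev T K) (tlev T H)"
  using t2 by blast

lemma nm_zero: "subgroup H G \<Longrightarrow> subgroup K G \<Longrightarrow> K \<subseteq> H \<Longrightarrow> tnm T K H \<zero>\<^bsub>tlev T K\<^esub> = \<zero>\<^bsub>tlev T H\<^esub>"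
  using t2 by blast

lemma cj_hom: "g \<in> carrier G \<Longrightarrow> subgroup H G \<Longrightarrow> tcj T g H \<in> ring_hom (tlev T H) (tlev T (conjs G g H))"
  using t3 by blast

lemma res_id: "subgroup H G \<Longrightarrow> x \<in> carrier (tlev T H) \<Longrightarrow> tres T H H x = x"
  using t4 by blast

lemma tr_id: "subgroup H G \<Longrightarrow> x \<in> carrier (tlev T H) \<Longrightarrow> ttr T H H x = x"
  using t4 by blast

lemma tr_trans: "subgroup H G \<Longrightarrow> subgroup K G \<Longrightarrow> subgroup L G \<Longrightarrow> L \<subseteq> K \<Longrightarrow> K \<subseteq> H \<Longrightarrow>
   x \<in> carrier (tlev T L) \<Longrightarrow> ttr T K H (ttr T L K x) = ttr T L H x"
  using t5 by blast

lemma cj_tr: "subgroup H G \<Longrightarrow> subgroup K G \<Longrightarrow> K \<subseteq> H \<Longrightarrow> g \<in> carrier G \<Longrightarrow> x \<in> carrier (tlev T K) \<Longrightarrow>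
   tcj T g H (ttr T K H x) = ttr T (conjs G g K) (conjs G g H) (tcj T g K x)"
  using t7 by blast

lemma frob: "subgroup H G \<Longrightarrow> subgroup K G \<Longrightarrow> K \<subseteq> H \<Longrightarrow> a \<in> carrier (tlev T K) \<Longrightarrow> b \<in> carrier (tlev T H) \<Longrightarrow>
   ttr T K H (a \<otimes>\<^bsub>tlev T K\<^esub> tres T H K b) = ttr T K H a \<otimes>\<^bsub>tlev T H\<^esub> b"
  using t8 by blast

lemma mackey_tr: "subgroup H G \<Longrightarrow> subgroup K G \<Longrightarrow> subgroup L G \<Longrightarrow> K \<subseteq> H \<Longrightarrow> L \<subseteq> H \<Longrightarrow>
   a \<in> carrier (tlev T K) \<Longrightarrow> tres T H L (ttr T K H a) = mackey_tr_rhs G T H L K a"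
  using t9 by blast

lemma nm_sum: "subgroup H G \<Longrightarrow> subgroup K G \<Longrightarrow> K \<subseteq> H \<Longrightarrow> a \<in> carrier (tlev T K) \<Longrightarrow> b \<in> carrier (tlev T K) \<Longrightarrow>
   tnm T K H (a \<oplus>\<^bsub>tlev T K\<^esub> b) = nm_sum_rhs G T H K a b"
  using t10 by blast

lemma nm_tr: "subgroup H G \<Longrightarrow> subgroup K G \<Longrightarrow> subgroup L G \<Longrightarrow> L \<subseteq> K \<Longrightarrow> K \<subseteq> H \<Longrightarrow>
   a \<in> carrier (tlev T L) \<Longrightarrow> tnm T K H (ttr T L K a) = nm_tr_rhs G T H K L a"
  using t11 by blast

lemma res_closed: "subgroup H G \<Longrightarrow> subgroup K G \<Longrightarrow> K \<subseteq> H \<Longrightarrow> x \<in> carrier (tlev T H) \<Longrightarrow> tres T H K x \<in> carrier (tlev T K)"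
  by (rule ring_hom_closed[OF res_hom])
lemma res_mult: "subgroup H G \<Longrightarrow> subgroup K G \<Longrightarrow> K \<subseteq> H \<Longrightarrow> x \<in> carrier (tlev T H) \<Longrightarrow> y \<in> carrier (tlev T H) \<Longrightarrow>
   tres T H K (x \<otimes>\<^bsub>tlev T H\<^esub> y) = tres T H K x \<otimes>\<^bsub>tlev T K\<^esub> tres T H K y"
  by (rule ring_hom_mult[OF res_hom])
lemma res_add: "subgroup H G \<Longrightarrow> subgroup K G \<Longrightarrow> K \<subseteq> H \<Longrightarrow> x \<in> carrier (tlev T H) \<Longrightarrow> y \<in> carrier (tlev T H) \<Longrightarrow>
   tres T H K (x \<oplus>\<^bsub>tlev T H\<^esub> y) = tres T H K x \<oplus>\<^bsub>tlev T K\<^esub> tres T H K y"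
  by (rule ring_hom_add[OF res_hom])
lemma res_zero: assumes "subgroup H G" "subgroup K G" "K \<subseteq> H" shows "tres T H K \<zero>\<^bsub>tlev T H\<^esub> = \<zero>\<^bsub>tlev T K\<^esub>"
  by (rule ring_hom_zero[OF res_hom[OF assms] lev_ring[OF assms(1)] lev_ring[OF assms(2)]])

lemma cj_closed: "g \<in> carrier G \<Longrightarrow> subgroup H G \<Longrightarrow> x \<in> carrier (tlev T H) \<Longrightarrow> tcj T g H x \<in> carrier (tlev T (conjs G g H))"
  by (rule ring_hom_closed[OF cj_hom])
lemma cj_mult: "g \<in> carrier G \<Longrightarrow> subgroup H G \<Longrightarrow> x \<in> carrier (tlev T H) \<Longrightarrow> y \<in> carrier (tlev T H) \<Longrightarrow>
   tcj T g H (x \<otimes>\<^bsub>tlev T H\<^esub> y) = tcj T g H x \<otimes>\<^bsub>tlev T (conjs G g H)\<^esub> tcj T g H y"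
  by (rule ring_hom_mult[OF cj_hom])
lemma cj_add: "g \<in> carrier G \<Longrightarrow> subgroup H G \<Longrightarrow> x \<in> carrier (tlev T H) \<Longrightarrow> y \<in> carrier (tlev T H) \<Longrightarrow>
   tcj T g H (x \<oplus>\<^bsub>tlev T H\<^esub> y) = tcj T g H x \<oplus>\<^bsub>tlev T (conjs G g H)\<^esub> tcj T g H y"
  by (rule ring_hom_add[OF cj_hom])
lemma cj_zero: assumes "g \<in> carrier G" "subgroup H G" shows "tcj T g H \<zero>\<^bsub>tlev T H\<^esub> = \<zero>\<^bsub>tlev T (conjs G g H)\<^esub>"
  by (rule ring_hom_zero[OF cj_hom[OF assms] lev_ring[OF assms(2)] lev_ring[OF conjs_subgroup[OF assms]]])

lemma tr_closed: "subgroup H G \<Longrightarrow> subgroup K G \<Longrightarrow> K \<subseteq> H \<Longrightarrow> x \<in> carrier (tlev T K) \<Longrightarrow> ttr T K H x \<in> carrier (tlev T H)"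
  using hom_in_carrier[OF tr_hom, of H K x] by simp
lemma tr_add: "subgroup H G \<Longrightarrow> subgroup K G \<Longrightarrow> K \<subseteq> H \<Longrightarrow> x \<in> carrier (tlev T K) \<Longrightarrow> y \<in> carrier (tlev T K) \<Longrightarrow>
   ttr T K H (x \<oplus>\<^bsub>tlev T K\<^esub> y) = ttr T K H x \<oplus>\<^bsub>tlev T H\<^esub> ttr T K H y"
  using hom_mult[OF tr_hom, of H K x y] by simp
lemma tr_zero: assumes "subgroup H G" "subgroup K G" "K \<subseteq> H" shows "ttr T K H \<zero>\<^bsub>tlev T K\<^esub> = \<zero>\<^bsub>tlev T H\<^esub>"
  using hom_one[OF tr_hom[OF assms] abelian_group.a_group[OF ring.is_abelian_group[OF lev_ring[OF assms(2)]]]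
                       abelian_group.a_group[OF ring.is_abelian_group[OF lev_ring[OF assms(1)]]]]
  by simp

lemma nm_closed: "subgroup H G \<Longrightarrow> subgroup K G \<Longrightarrow> K \<subseteq> H \<Longrightarrow> x \<in> carrier (tlev T K) \<Longrightarrow> tnm T K H x \<in> carrier (tlev T H)"
  by (rule hom_in_carrier[OF nm_hom])
lemma nm_mult: "subgroup H G \<Longrightarrow> subgroup K G \<Longrightarrow> K \<subseteq> H \<Longrightarrow> x \<in> carrier (tlev T K) \<Longrightarrow> y \<in> carrier (tlev T K) \<Longrightarrow>
   tnm T K H (x \<otimes>\<^bsub>tlev T K\<^esub> y) = tnm T K H x \<otimes>\<^bsub>tlev T H\<^esub> tnm T K H y"
  by (rule hom_mult[OF nm_hom])

end


context tamb begin

lemma tideal_ideal: assumes "tideal G T I" "subgroup H G" shows "ideal (I H) (tlev T H)"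
  using assms(1)[unfolded tideal_def, THEN conjunct2, THEN conjunct1, rule_format, OF assms(2)] .

lemma tideal_carrier: "tideal G T I \<Longrightarrow> subgroup H G \<Longrightarrow> I H \<subseteq> carrier (tlev T H)"
  by (rule additive_subgroup.a_subset[OF ideal.axioms(1)[OF tideal_ideal]])

lemma tideal_off: assumes "tideal G T I" "\<not> subgroup H G" shows "I H = {}"
  using assms(1)[unfolded tideal_def, THEN conjunct1, rule_format, OF assms(2)] .

lemma tideal_C: assumes "tideal G T I" "subgroup H G" "subgroup K G" "K \<subseteq> H"
  shows "tres T H K ` I H \<subseteq> I K \<and> ttr T K H ` I K \<subseteq> I H \<and> tnm T K H ` I K \<subseteq> I H"
  using assms(1)[unfolded tideal_def, THEN conjunct2, THEN conjunct2, THEN conjunct1, rule_format, OF assms(2-4)] .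

lemma tideal_res: "tideal G T I \<Longrightarrow> subgroup H G \<Longrightarrow> subgroup K G \<Longrightarrow> K \<subseteq> H \<Longrightarrow> x \<in> I H \<Longrightarrow> tres T H K x \<in> I K"
  by (rule subsetD[OF tideal_C[THEN conjunct1] imageI])
lemma tideal_tr: "tideal G T I \<Longrightarrow> subgroup H G \<Longrightarrow> subgroup K G \<Longrightarrow> K \<subseteq> H \<Longrightarrow> x \<in> I K \<Longrightarrow> ttr T K H x \<in> I H"
  by (rule subsetD[OF tideal_C[THEN conjunct2, THEN conjunct1] imageI])
lemma tideal_nm: "tideal G T I \<Longrightarrow> subgroup H G \<Longrightarrow> subgroup K G \<Longrightarrow> K \<subseteq> H \<Longrightarrow> x \<in> I K \<Longrightarrow> tnm T K H x \<in> I H"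
  by (rule subsetD[OF tideal_C[THEN conjunct2, THEN conjunct2] imageI])
lemma tideal_cj: assumes "tideal G T I" "subgroup H G" "g \<in> carrier G" "x \<in> I H" shows "tcj T g H x \<in> I (conjs G g H)"
  by (rule subsetD[OF assms(1)[unfolded tideal_def, THEN conjunct2, THEN conjunct2, THEN conjunct2, rule_format, OF assms(2,3)] imageI[OF assms(4)]])

lemma tideal_mult_l: "tideal G T I \<Longrightarrow> subgroup H G \<Longrightarrow> x \<in> I H \<Longrightarrow> r \<in> carrier (tlev T H) \<Longrightarrow> r \<otimes>\<^bsub>tlev T H\<^esub> x \<in> I H"
  by (rule ideal.I_l_closed[OF tideal_ideal])
lemma tideal_mult_r: "tideal G T I \<Longrightarrow> subgroup H G \<Longrightarrow> x \<in> I H \<Longrightarrow> r \<in> carrier (tlev T H) \<Longrightarrow> x \<otimes>\<^bsub>tlev T H\<^esub> r \<in> I H"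
  by (rule ideal.I_r_closed[OF tideal_ideal])
lemma tideal_add: "tideal G T I \<Longrightarrow> subgroup H G \<Longrightarrow> x \<in> I H \<Longrightarrow> y \<in> I H \<Longrightarrow> x \<oplus>\<^bsub>tlev T H\<^esub> y \<in> I H"
  by (rule additive_subgroup.a_closed[OF ideal.axioms(1)[OF tideal_ideal]])
lemma tideal_zero: "tideal G T I \<Longrightarrow> subgroup H G \<Longrightarrow> \<zero>\<^bsub>tlev T H\<^esub> \<in> I H"
  by (rule additive_subgroup.zero_closed[OF ideal.axioms(1)[OF tideal_ideal]])

lemma tunit_tideal: "tideal G T (tunit G T)"
  unfolding tideal_def tunit_def
proof (intro conjI allI impI ballI subsetI)
  fix H assume "subgroup H G"
  then show "ideal (if subgroup H G then carrier (tlev T H) else {}) (tlev T H)"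
    using ring.oneideal[OF lev_ring] by simp
next
  fix H K y assume H: "subgroup H G" and K: "subgroup K G" and KH: "K \<subseteq> H"
  { assume "y \<in> tres T H K ` (if subgroup H G then carrier (tlev T H) else {})"
    then show "y \<in> (if subgroup K G then carrier (tlev T K) else {})"
      using H K KH res_closed by auto }
  { assume "y \<in> ttr T K H ` (if subgroup K G then carrier (tlev T K) else {})"
    then show "y \<in> (if subgroup H G then carrier (tlev T H) else {})"
      using H K KH tr_closed by auto }
  { assume "y \<in> tnm T K H ` (if subgroup K G then carrier (tlev T K) else {})"
    then show "y \<in> (if subgroup H G then carrier (tlev T H) else {})"
      using H K KH nm_closed by auto }
next
  fix H g y assume H: "subgroup H G" and g: "g \<in> carrier G"
  assume "y \<in> tcj T g H ` (if subgroup H G then carrier (tlev T H) else {})"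
  then show "y \<in> (if subgroup (conjs G g H) G then carrier (tlev T (conjs G g H)) else {})"
    using H g cj_closed conjs_subgroup[OF g H] by auto
qed auto

definition genfam :: "('g set \<Rightarrow> 'a set) \<Rightarrow> ('g set \<Rightarrow> 'a set) set" where
  "genfam Xs = {J. tideal G T J \<and> (\<forall>H'. subgroup H' G \<longrightarrow> Xs H' \<subseteq> J H')}"

lemma tgen_eq: "subgroup H G \<Longrightarrow> tgen G T Xs H = (\<Inter>J\<in>genfam Xs. J H)"
  unfolding tgen_def genfam_def by simp

lemma tgen_off: "\<not> subgroup H G \<Longrightarrow> tgen G T Xs H = {}"
  unfolding tgen_def by simp

lemma tgen_sup: "subgroup H G \<Longrightarrow> Xs H \<subseteq> tgen G T Xs H"
  unfolding tgen_eq genfam_def by blast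

lemma tgen_least: "tideal G T J \<Longrightarrow> (\<And>H. subgroup H G \<Longrightarrow> Xs H \<subseteq> J H) \<Longrightarrow> tgen G T Xs \<le> J"
proof (rule le_funI)
  fix H assume J: "tideal G T J" and XJ: "\<And>H. subgroup H G \<Longrightarrow> Xs H \<subseteq> J H"
  have "J \<in> genfam Xs" using J XJ unfolding genfam_def by blast
  then show "tgen G T Xs H \<le> J H"
    by (cases "subgroup H G") (auto simp: tgen_eq tgen_off)
qed

lemma tgen_mono: "(\<And>H. subgroup H G \<Longrightarrow> Xs H \<subseteq> Ys H) \<Longrightarrow> tgen G T Xs \<le> tgen G T Ys"
proof (rule le_funI)
  fix H assume XY: "\<And>H. subgroup H G \<Longrightarrow> Xs H \<subseteq> Ys H"
  have "genfam Ys \<subseteq> genfam Xs" using XY unfolding genfam_def by blast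
  then show "tgen G T Xs H \<le> tgen G T Ys H"
    by (cases "subgroup H G") (auto simp: tgen_eq tgen_off)
qed

lemma tgen_mem: "x \<in> tgen G T Xs H \<longleftrightarrow> subgroup H G \<and> (\<forall>J\<in>genfam Xs. x \<in> J H)"
  by (cases "subgroup H G") (simp_all add: tgen_eq tgen_off)

lemma genfam_tideal: "J \<in> genfam Xs \<Longrightarrow> tideal G T J"
  unfolding genfam_def by simp

lemma tgen_tideal:
  assumes XC: "\<And>H. subgroup H G \<Longrightarrow> Xs H \<subseteq> carrier (tlev T H)"
  shows "tideal G T (tgen G T Xs)"
proof -
  have un: "tunit G T \<in> genfam Xs" unfolding genfam_def using tunit_tideal XC
    by (simp add: tunit_def)
  show ?thesis unfolding tideal_def
  proof (intro conjI allI impI)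
    fix H show "\<not> subgroup H G \<Longrightarrow> tgen G T Xs H = {}" by (rule tgen_off)
  next
    fix H assume H: "subgroup H G"
    have "ideal (\<Inter> ((\<lambda>J. J H) ` genfam Xs)) (tlev T H)"
    proof (rule ring.i_Intersect[OF lev_ring[OF H]])
      show "(\<lambda>J. J H) ` genfam Xs \<noteq> {}" using un by blast
      fix I assume "I \<in> (\<lambda>J. J H) ` genfam Xs"
      then obtain J where "J \<in> genfam Xs" "I = J H" by blast
      then show "ideal I (tlev T H)" using tideal_ideal[OF genfam_tideal H] by simp
    qed
    then show "ideal (tgen G T Xs H) (tlev T H)" using tgen_eq[OF H] by simp
  next
    fix H K assume H: "subgroup H G" and K: "subgroup K G" and KH: "K \<subseteq> H"
    show "tres T H K ` tgen G T Xs H \<subseteq> tgen G T Xs K"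
    proof (rule image_subsetI)
      fix x assume "x \<in> tgen G T Xs H"
      then have "\<forall>J\<in>genfam Xs. x \<in> J H" by (simp add: tgen_mem)
      then have "\<forall>J\<in>genfam Xs. tres T H K x \<in> J K"
        using tideal_res[OF genfam_tideal H K KH] by blast
      then show "tres T H K x \<in> tgen G T Xs K" using K by (simp add: tgen_mem)
    qed
    show "ttr T K H ` tgen G T Xs K \<subseteq> tgen G T Xs H"
    proof (rule image_subsetI)
      fix x assume "x \<in> tgen G T Xs K"
      then have "\<forall>J\<in>genfam Xs. x \<in> J K" by (simp add: tgen_mem)
      then have "\<forall>J\<in>genfam Xs. ttr T K H x \<in> J H"
        using tideal_tr[OF genfam_tideal H K KH] by blast
      then show "ttr T K H x \<in> tgen G T Xs H" using H by (simp add: tgen_mem)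
    qed
    show "tnm T K H ` tgen G T Xs K \<subseteq> tgen G T Xs H"
    proof (rule image_subsetI)
      fix x assume "x \<in> tgen G T Xs K"
      then have "\<forall>J\<in>genfam Xs. x \<in> J K" by (simp add: tgen_mem)
      then have "\<forall>J\<in>genfam Xs. tnm T K H x \<in> J H"
        using tideal_nm[OF genfam_tideal H K KH] by blast
      then show "tnm T K H x \<in> tgen G T Xs H" using H by (simp add: tgen_mem)
    qed
  next
    fix H assume H: "subgroup H G"
    show "\<forall>g\<in>carrier G. tcj T g H ` tgen G T Xs H \<subseteq> tgen G T Xs (conjs G g H)"
    proof (intro ballI image_subsetI)
      fix g x assume g: "g \<in> carrier G" and "x \<in> tgen G T Xs H"
      then have "\<forall>J\<in>genfam Xs. x \<in> J H" by (simp add: tgen_mem)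
      then have "\<forall>J\<in>genfam Xs. tcj T g H x \<in> J (conjs G g H)"
        using tideal_cj[OF genfam_tideal H g] by blast
      then show "tcj T g H x \<in> tgen G T Xs (conjs G g H)" using conjs_subgroup[OF g H] by (simp add: tgen_mem)
    qed
  qed
qed

lemma tgen_id: "tideal G T I \<Longrightarrow> tgen G T I = I"
proof (rule antisym)
  assume I: "tideal G T I"
  show "tgen G T I \<le> I" by (rule tgen_least[OF I]) simp
  show "I \<le> tgen G T I"
  proof (rule le_funI)
    fix H show "I H \<le> tgen G T I H"
      by (cases "subgroup H G") (simp_all add: tgen_sup tideal_off[OF I])
  qed
qed

end


context tamb begin

lemma tprod_tideal:
  assumes I: "tideal G T I" and J: "tideal G T J"
  shows "tideal G T (tprod G T I J)"
  unfolding tprod_def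
proof (rule tgen_tideal)
  fix H assume H: "subgroup H G"
  show "{x \<otimes>\<^bsub>tlev T H\<^esub> y |x y. x \<in> I H \<and> y \<in> J H} \<subseteq> carrier (tlev T H)"
  proof
    fix z assume "z \<in> {x \<otimes>\<^bsub>tlev T H\<^esub> y |x y. x \<in> I H \<and> y \<in> J H}"
    then obtain x y where z: "z = x \<otimes>\<^bsub>tlev T H\<^esub> y" "x \<in> I H" "y \<in> J H" by blast
    have "y \<in> carrier (tlev T H)" using z(3) tideal_carrier[OF J H] by (rule subsetD[rotated])
    then have "z \<in> I H" unfolding z(1) by (rule tideal_mult_r[OF I H z(2)])
    then show "z \<in> carrier (tlev T H)" using tideal_carrier[OF I H] by (rule subsetD[rotated])
  qed
qed

lemma tprod_gen: "subgroup H G \<Longrightarrow> x \<in> I H \<Longrightarrow> y \<in> J H \<Longrightarrow> x \<otimes>\<^bsub>tlev T H\<^esub> y \<in> tprod G T I J H"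
  unfolding tprod_def by (rule subsetD[OF tgen_sup]) blast+

lemma tprod_mono: "I \<le> I' \<Longrightarrow> J \<le> J' \<Longrightarrow> tprod G T I J \<le> tprod G T I' J'"
  unfolding tprod_def by (rule tgen_mono) (unfold le_fun_def, blast)

lemma tpow_tideal: "tideal G T I \<Longrightarrow> tideal G T (tpow G T I n)"
  by (induction n) (simp_all add: tunit_tideal tprod_tideal)

lemma tpow_mono: "I \<le> J \<Longrightarrow> tpow G T I n \<le> tpow G T J n"
  by (induction n) (simp_all add: tprod_mono)

lemma tgen1_tideal: "subgroup H G \<Longrightarrow> x \<in> carrier (tlev T H) \<Longrightarrow> tideal G T (tgen1 G T H x)"
  unfolding tgen1_def by (rule tgen_tideal) simp

lemma tgen1_mem: "subgroup H G \<Longrightarrow> x \<in> tgen1 G T H x H"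
  unfolding tgen1_def using tgen_sup[of H "\<lambda>H'. if H' = H then {x} else {}"] by simp

lemma tgen1_le: "tideal G T I \<Longrightarrow> x \<in> I H \<Longrightarrow> tgen1 G T H x \<le> I"
  unfolding tgen1_def by (rule tgen_least) simp_all

lemma trad_mono: assumes IJ: "I \<le> J" shows "trad G T I \<le> trad G T J"
proof (rule le_funI, rule subsetI)
  fix H x assume "x \<in> trad G T I H"
  then have H: "subgroup H G" and xc: "x \<in> carrier (tlev T H)"
    and n: "\<exists>n\<ge>1. tpow G T (tgen1 G T H x) n \<le> I"
    unfolding trad_def by (auto split: if_splits)
  from n obtain n where n1: "n \<ge> 1" and nI: "tpow G T (tgen1 G T H x) n \<le> I" by blast
  have "tpow G T (tgen1 G T H x) n \<le> J" using nI IJ by (rule order_trans)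
  then show "x \<in> trad G T J H" unfolding trad_def using H xc n1 by auto
qed

lemma le_trad:
  assumes I: "tideal G T I"
  shows "I \<le> trad G T I"
proof (rule le_funI)
  fix H
  show "I H \<le> trad G T I H"
  proof (cases "subgroup H G")
    case False then show ?thesis using tideal_off[OF I] by simp
  next
    case H: True
    show ?thesis
    proof
      fix x assume x: "x \<in> I H"
      have xc: "x \<in> carrier (tlev T H)" using x tideal_carrier[OF I H] by blast
      have g1: "tgen1 G T H x \<le> I" by (rule tgen1_le[OF I x])
      have "tpow G T (tgen1 G T H x) 1 \<le> I"
        unfolding One_nat_def tpow.simps tprod_def
      proof (rule tgen_least[OF I])
        fix K assume K: "subgroup K G"
        show "{u \<otimes>\<^bsub>tlev T K\<^esub> v |u v. u \<in> tunit G T K \<and> v \<in> tgen1 G T H x K} \<subseteq> I K"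
        proof
          fix z assume "z \<in> {u \<otimes>\<^bsub>tlev T K\<^esub> v |u v. u \<in> tunit G T K \<and> v \<in> tgen1 G T H x K}"
          then obtain u v where z: "z = u \<otimes>\<^bsub>tlev T K\<^esub> v" "u \<in> tunit G T K" "v \<in> tgen1 G T H x K" by blast
          have "v \<in> I K" using z(3) g1 by (auto simp: le_fun_def)
          moreover have "u \<in> carrier (tlev T K)" using z(2) K by (simp add: tunit_def)
          ultimately show "z \<in> I K" unfolding z(1) by (rule tideal_mult_l[OF I K])
        qed
      qed
      then show "x \<in> trad G T I H" unfolding trad_def using H xc by auto
    qed
  qed
qed

lemma tprime_tideal: "tprime G T Q \<Longrightarrow> tideal G T Q"
  unfolding tprime_def by blast

lemma tpow_prime:
  assumes Q: "tprime G T Q" and J: "tideal G T J"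
  shows "tpow G T J n \<le> Q \<Longrightarrow> J \<le> Q"
proof (induction n)
  case 0
  have S: "subgroup (carrier G) G" by (rule subgroup_self)
  have "\<one>\<^bsub>tlev T (carrier G)\<^esub> \<in> tunit G T (carrier G)"
    using S cring.axioms(1)[OF lev_cring[OF S]] ring.ring_simprules(6) by (simp add: tunit_def)
  then have "\<one>\<^bsub>tlev T (carrier G)\<^esub> \<in> Q (carrier G)" using 0 by (auto simp: le_fun_def)
  then show ?case using Q unfolding tprime_def by blast
next
  case (Suc n)
  have "tprod G T (tpow G T J n) J \<le> Q" using Suc.prems by simp
  then have "tpow G T J n \<le> Q \<or> J \<le> Q"
    using Q tpow_tideal[OF J] J unfolding tprime_def by blast
  then show ?case using Suc.IH by blast
qed

lemma prime_rad:
  assumes Q: "tprime G T Q"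
  shows "trad G T Q \<le> Q"
proof (rule le_funI)
  fix H show "trad G T Q H \<le> Q H"
  proof
    fix x assume "x \<in> trad G T Q H"
    then have H: "subgroup H G" and xc: "x \<in> carrier (tlev T H)"
      and n: "\<exists>n\<ge>1. tpow G T (tgen1 G T H x) n \<le> Q"
      unfolding trad_def by (auto split: if_splits)
    then obtain n where "tpow G T (tgen1 G T H x) n \<le> Q" by blast
    then have "tgen1 G T H x \<le> Q" by (rule tpow_prime[OF Q tgen1_tideal[OF H xc]])
    then show "x \<in> Q H" using tgen1_mem[OF H] by (auto simp: le_fun_def)
  qed
qed

end


locale tmorph = T: tamb G T + S: tamb G S
  for G :: "'g monoid" and T :: "('g, 'a) tambara" and S :: "('g, 'b) tambara" +
  fixes \<phi> :: "'g set \<Rightarrow> 'a \<Rightarrow> 'b"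
  assumes mor: "tmor G T S \<phi>"
begin

lemmas mD = mor[unfolded tmor_def]

lemma phi_hom: "subgroup H G \<Longrightarrow> \<phi> H \<in> ring_hom (tlev T H) (tlev S H)"
  using mD[THEN conjunct1] by blast

lemma phi_res: assumes "subgroup H G" "subgroup K G" "K \<subseteq> H" "x \<in> carrier (tlev T H)"
  shows "\<phi> K (tres T H K x) = tres S H K (\<phi> H x)"
  using mD[THEN conjunct2, THEN conjunct1, rule_format, OF assms(1-3), THEN conjunct1, rule_format, OF assms(4)] .

lemma phi_tr: assumes "subgroup H G" "subgroup K G" "K \<subseteq> H" "x \<in> carrier (tlev T K)"
  shows "\<phi> H (ttr T K H x) = ttr S K H (\<phi> K x)"
  using mD[THEN conjunct2, THEN conjunct1, rule_format, OF assms(1-3), THEN conjunct2, rule_format, OF assms(4)] by (rule conjunct1)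

lemma phi_nm: assumes "subgroup H G" "subgroup K G" "K \<subseteq> H" "x \<in> carrier (tlev T K)"
  shows "\<phi> H (tnm T K H x) = tnm S K H (\<phi> K x)"
  using mD[THEN conjunct2, THEN conjunct1, rule_format, OF assms(1-3), THEN conjunct2, rule_format, OF assms(4)] by (rule conjunct2)

lemma phi_cj: assumes "subgroup H G" "g \<in> carrier G" "x \<in> carrier (tlev T H)"
  shows "\<phi> (conjs G g H) (tcj T g H x) = tcj S g H (\<phi> H x)"
  using mD[THEN conjunct2, THEN conjunct2, rule_format, OF assms] .

lemma phi_closed: "subgroup H G \<Longrightarrow> x \<in> carrier (tlev T H) \<Longrightarrow> \<phi> H x \<in> carrier (tlev S H)"
  by (rule ring_hom_closed[OF phi_hom])

lemma phi_mult: "subgroup H G \<Longrightarrow> x \<in> carrier (tlev T H) \<Longrightarrow> y \<in> carrier (tlev T H) \<Longrightarrow>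
   \<phi> H (x \<otimes>\<^bsub>tlev T H\<^esub> y) = \<phi> H x \<otimes>\<^bsub>tlev S H\<^esub> \<phi> H y"
  by (rule ring_hom_mult[OF phi_hom])

lemma phi_one: "subgroup H G \<Longrightarrow> \<phi> H \<one>\<^bsub>tlev T H\<^esub> = \<one>\<^bsub>tlev S H\<^esub>"
  by (rule ring_hom_one[OF phi_hom])

inductive inE :: "('g set \<Rightarrow> 'a set) \<Rightarrow> nat \<Rightarrow> 'g set \<Rightarrow> 'b \<Rightarrow> bool" for A where
  zero: "subgroup M G \<Longrightarrow> inE A 0 M \<zero>\<^bsub>tlev S M\<^esub>"
| step: "subgroup M G \<Longrightarrow> subgroup K G \<Longrightarrow> K \<subseteq> M \<Longrightarrow> s \<in> carrier (tlev S K) \<Longrightarrow> a \<in> A K \<Longrightarrow>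
         inE A n M e \<Longrightarrow> inE A (Suc n) M (ttr S K M (s \<otimes>\<^bsub>tlev S K\<^esub> \<phi> K a) \<oplus>\<^bsub>tlev S M\<^esub> e)"

lemma inE_sub: "inE A n M e \<Longrightarrow> subgroup M G"
  by (induction rule: inE.induct) simp_all

lemma single_closed:
  assumes A: "tideal G T A" and M: "subgroup M G" and K: "subgroup K G" and KM: "K \<subseteq> M"
    and s: "s \<in> carrier (tlev S K)" and a: "a \<in> A K"
  shows "ttr S K M (s \<otimes>\<^bsub>tlev S K\<^esub> \<phi> K a) \<in> carrier (tlev S M)"
proof -
  interpret SK: cring "tlev S K" by (rule S.lev_cring[OF K])
  have ac: "a \<in> carrier (tlev T K)" using a T.tideal_carrier[OF A K] by (rule subsetD[rotated])
  have "\<phi> K a \<in> carrier (tlev S K)" by (rule phi_closed[OF K ac])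
  then have "s \<otimes>\<^bsub>tlev S K\<^esub> \<phi> K a \<in> carrier (tlev S K)" using s by simp
  then show ?thesis by (rule S.tr_closed[OF M K KM])
qed

lemma inE_carrier: assumes A: "tideal G T A" shows "inE A n M e \<Longrightarrow> e \<in> carrier (tlev S M)"
proof (induction rule: inE.induct)
  case (zero M)
  interpret SM: cring "tlev S M" by (rule S.lev_cring[OF zero.hyps])
  show ?case by simp
next
  case (step M K s a n e)
  interpret SM: cring "tlev S M" by (rule S.lev_cring[OF step.hyps(1)])
  have "ttr S K M (s \<otimes>\<^bsub>tlev S K\<^esub> \<phi> K a) \<in> carrier (tlev S M)"
    by (rule single_closed[OF A step.hyps(1-5)])
  then show ?case using step.IH by simp
qed

lemma inE_single:
  assumes A: "tideal G T A" and M: "subgroup M G" and K: "subgroup K G" and KM: "K \<subseteq> M"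
    and s: "s \<in> carrier (tlev S K)" and a: "a \<in> A K"
  shows "inE A 1 M (ttr S K M (s \<otimes>\<^bsub>tlev S K\<^esub> \<phi> K a))"
proof -
  interpret SM: cring "tlev S M" by (rule S.lev_cring[OF M])
  have "inE A (Suc 0) M (ttr S K M (s \<otimes>\<^bsub>tlev S K\<^esub> \<phi> K a) \<oplus>\<^bsub>tlev S M\<^esub> \<zero>\<^bsub>tlev S M\<^esub>)"
    by (rule inE.step[OF M K KM s a inE.zero[where A=A, OF M]])
  moreover have "ttr S K M (s \<otimes>\<^bsub>tlev S K\<^esub> \<phi> K a) \<oplus>\<^bsub>tlev S M\<^esub> \<zero>\<^bsub>tlev S M\<^esub> = ttr S K M (s \<otimes>\<^bsub>tlev S K\<^esub> \<phi> K a)"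
    using single_closed[OF assms] by simp
  ultimately show ?thesis by simp
qed

lemma inE_add:
  assumes A: "tideal G T A"
  shows "inE A n M e1 \<Longrightarrow> inE A m M e2 \<Longrightarrow> inE A (n + m) M (e1 \<oplus>\<^bsub>tlev S M\<^esub> e2)"
proof (induction rule: inE.induct)
  case (zero M)
  interpret SM: cring "tlev S M" by (rule S.lev_cring[OF zero.hyps])
  have "e2 \<in> carrier (tlev S M)" by (rule inE_carrier[OF A zero.prems])
  then show ?case using zero.prems by simp
next
  case (step M K s a n e)
  interpret SM: cring "tlev S M" by (rule S.lev_cring[OF step.hyps(1)])
  have c1: "ttr S K M (s \<otimes>\<^bsub>tlev S K\<^esub> \<phi> K a) \<in> carrier (tlev S M)"
    by (rule single_closed[OF A step.hyps(1-5)])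
  have c2: "e \<in> carrier (tlev S M)" by (rule inE_carrier[OF A step.hyps(6)])
  have c3: "e2 \<in> carrier (tlev S M)" by (rule inE_carrier[OF A step.prems])
  have "inE A (Suc (n + m)) M (ttr S K M (s \<otimes>\<^bsub>tlev S K\<^esub> \<phi> K a) \<oplus>\<^bsub>tlev S M\<^esub> (e \<oplus>\<^bsub>tlev S M\<^esub> e2))"
    by (rule inE.step[OF step.hyps(1-5) step.IH[OF step.prems]])
  then show ?case using c1 c2 c3 by (simp add: SM.a_assoc)
qed

end


lemma rep_in: "D \<noteq> {} \<Longrightarrow> rep D \<in> D"
  unfolding rep_def by (rule someI_ex) blast

context group begin

lemma rep_dcos:
  assumes L: "subgroup L G" and M: "subgroup M G" and K: "subgroup K G"
    and LM: "L \<subseteq> M" and KM: "K \<subseteq> M" and D: "D \<in> dcosets G L M K"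
  shows "rep D \<in> M"
proof -
  obtain h where h: "h \<in> M" "D = dcos G L h K" using D unfolding dcosets_def by blast
  have hc: "h \<in> carrier G" using h(1) subgroup.subset[OF M] by (rule subsetD[rotated])
  have "\<one> \<otimes> h \<otimes> \<one> \<in> D" unfolding h(2) dcos_def
    using subgroup.one_closed[OF L] subgroup.one_closed[OF K] by blast
  then have "D \<noteq> {}" by blast
  then have "rep D \<in> D" by (rule rep_in)
  then obtain l k where lk: "rep D = l \<otimes> h \<otimes> k" "l \<in> L" "k \<in> K" unfolding h(2) dcos_def by blast
  have "l \<in> M" using lk(2) LM by (rule subsetD[rotated])
  then have "l \<otimes> h \<in> M" by (rule subgroup.m_closed[OF M _ h(1)])
  moreover have "k \<in> M" using lk(3) KM by (rule subsetD[rotated])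
  ultimately show ?thesis unfolding lk(1) by (rule subgroup.m_closed[OF M])
qed

end

context tmorph begin

lemma inE_cj:
  assumes A: "tideal G T A" and g: "g \<in> carrier G"
  shows "inE A n M e \<Longrightarrow> inE A n (conjs G g M) (tcj S g M e)"
proof (induction rule: inE.induct)
  case (zero M)
  have "tcj S g M \<zero>\<^bsub>tlev S M\<^esub> = \<zero>\<^bsub>tlev S (conjs G g M)\<^esub>" by (rule S.cj_zero[OF g zero.hyps])
  then show ?case using inE.zero[where A=A, OF T.conjs_subgroup[OF g zero.hyps]] by simp
next
  case (step M K s a n e)
  note M = step.hyps(1) and K = step.hyps(2) and KM = step.hyps(3) and s = step.hyps(4) and a = step.hyps(5)
  have M': "subgroup (conjs G g M) G" by (rule T.conjs_subgroup[OF g M])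
  have K': "subgroup (conjs G g K) G" by (rule T.conjs_subgroup[OF g K])
  have KM': "conjs G g K \<subseteq> conjs G g M" by (rule T.conjs_mono[OF KM])
  interpret SK: cring "tlev S K" by (rule S.lev_cring[OF K])
  have ac: "a \<in> carrier (tlev T K)" using a T.tideal_carrier[OF A K] by (rule subsetD[rotated])
  have pa: "\<phi> K a \<in> carrier (tlev S K)" by (rule phi_closed[OF K ac])
  have x: "s \<otimes>\<^bsub>tlev S K\<^esub> \<phi> K a \<in> carrier (tlev S K)" using s pa by simp
  have c1: "ttr S K M (s \<otimes>\<^bsub>tlev S K\<^esub> \<phi> K a) \<in> carrier (tlev S M)"
    by (rule single_closed[OF A M K KM s a])
  have c2: "e \<in> carrier (tlev S M)" by (rule inE_carrier[OF A step.hyps(6)])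
  have "tcj S g M (ttr S K M (s \<otimes>\<^bsub>tlev S K\<^esub> \<phi> K a) \<oplus>\<^bsub>tlev S M\<^esub> e)
      = tcj S g M (ttr S K M (s \<otimes>\<^bsub>tlev S K\<^esub> \<phi> K a)) \<oplus>\<^bsub>tlev S (conjs G g M)\<^esub> tcj S g M e"
    by (rule S.cj_add[OF g M c1 c2])
  also have "tcj S g M (ttr S K M (s \<otimes>\<^bsub>tlev S K\<^esub> \<phi> K a))
      = ttr S (conjs G g K) (conjs G g M) (tcj S g K (s \<otimes>\<^bsub>tlev S K\<^esub> \<phi> K a))"
    by (rule S.cj_tr[OF M K KM g x])
  also have "tcj S g K (s \<otimes>\<^bsub>tlev S K\<^esub> \<phi> K a) = tcj S g K s \<otimes>\<^bsub>tlev S (conjs G g K)\<^esub> tcj S g K (\<phi> K a)"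
    by (rule S.cj_mult[OF g K s pa])
  also have "tcj S g K (\<phi> K a) = \<phi> (conjs G g K) (tcj T g K a)"
    by (rule phi_cj[OF K g ac, symmetric])
  finally have eq: "tcj S g M (ttr S K M (s \<otimes>\<^bsub>tlev S K\<^esub> \<phi> K a) \<oplus>\<^bsub>tlev S M\<^esub> e) =
     ttr S (conjs G g K) (conjs G g M) (tcj S g K s \<otimes>\<^bsub>tlev S (conjs G g K)\<^esub> \<phi> (conjs G g K) (tcj T g K a))
     \<oplus>\<^bsub>tlev S (conjs G g M)\<^esub> tcj S g M e" .
  have s': "tcj S g K s \<in> carrier (tlev S (conjs G g K))" by (rule S.cj_closed[OF g K s])
  have a': "tcj T g K a \<in> A (conjs G g K)" by (rule T.tideal_cj[OF A K g a])
  show ?case unfolding eq by (rule inE.step[OF M' K' KM' s' a' step.IH])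
qed

lemma inE_tr:
  assumes A: "tideal G T A" and M': "subgroup M' G"
  shows "inE A n M e \<Longrightarrow> M \<subseteq> M' \<Longrightarrow> inE A n M' (ttr S M M' e)"
proof (induction rule: inE.induct)
  case (zero M)
  have "ttr S M M' \<zero>\<^bsub>tlev S M\<^esub> = \<zero>\<^bsub>tlev S M'\<^esub>" by (rule S.tr_zero[OF M' zero.hyps zero.prems])
  then show ?case using inE.zero[where A=A, OF M'] by simp
next
  case (step M K s a n e)
  note M = step.hyps(1) and K = step.hyps(2) and KM = step.hyps(3) and s = step.hyps(4) and a = step.hyps(5)
  note MM' = step.prems
  have KM': "K \<subseteq> M'" using KM MM' by (rule order_trans)
  interpret SK: cring "tlev S K" by (rule S.lev_cring[OF K])
  have ac: "a \<in> carrier (tlev T K)" using a T.tideal_carrier[OF A K] by (rule subsetD[rotated])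
  have pa: "\<phi> K a \<in> carrier (tlev S K)" by (rule phi_closed[OF K ac])
  have x: "s \<otimes>\<^bsub>tlev S K\<^esub> \<phi> K a \<in> carrier (tlev S K)" using s pa by simp
  have c1: "ttr S K M (s \<otimes>\<^bsub>tlev S K\<^esub> \<phi> K a) \<in> carrier (tlev S M)"
    by (rule single_closed[OF A M K KM s a])
  have c2: "e \<in> carrier (tlev S M)" by (rule inE_carrier[OF A step.hyps(6)])
  have "ttr S M M' (ttr S K M (s \<otimes>\<^bsub>tlev S K\<^esub> \<phi> K a) \<oplus>\<^bsub>tlev S M\<^esub> e)
      = ttr S M M' (ttr S K M (s \<otimes>\<^bsub>tlev S K\<^esub> \<phi> K a)) \<oplus>\<^bsub>tlev S M'\<^esub> ttr S M M' e"
    by (rule S.tr_add[OF M' M MM' c1 c2])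
  also have "ttr S M M' (ttr S K M (s \<otimes>\<^bsub>tlev S K\<^esub> \<phi> K a)) = ttr S K M' (s \<otimes>\<^bsub>tlev S K\<^esub> \<phi> K a)"
    by (rule S.tr_trans[OF M' M K KM MM' x])
  finally have eq: "ttr S M M' (ttr S K M (s \<otimes>\<^bsub>tlev S K\<^esub> \<phi> K a) \<oplus>\<^bsub>tlev S M\<^esub> e)
      = ttr S K M' (s \<otimes>\<^bsub>tlev S K\<^esub> \<phi> K a) \<oplus>\<^bsub>tlev S M'\<^esub> ttr S M M' e" .
  show ?case unfolding eq by (rule inE.step[OF M' K KM' s a step.IH[OF MM']])
qed

lemma inE_mult:
  assumes A: "tideal G T A"
  shows "inE A n M e \<Longrightarrow> r \<in> carrier (tlev S M) \<Longrightarrow> inE A n M (r \<otimes>\<^bsub>tlev S M\<^esub> e)"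
proof (induction arbitrary: r rule: inE.induct)
  case (zero M)
  interpret SM: cring "tlev S M" by (rule S.lev_cring[OF zero.hyps])
  show ?case using zero.prems inE.zero[where A=A, OF zero.hyps] by simp
next
  case (step M K s a n e)
  note M = step.hyps(1) and K = step.hyps(2) and KM = step.hyps(3) and s = step.hyps(4) and a = step.hyps(5)
  note r = step.prems
  interpret SK: cring "tlev S K" by (rule S.lev_cring[OF K])
  interpret SM: cring "tlev S M" by (rule S.lev_cring[OF M])
  have ac: "a \<in> carrier (tlev T K)" using a T.tideal_carrier[OF A K] by (rule subsetD[rotated])
  have pa: "\<phi> K a \<in> carrier (tlev S K)" by (rule phi_closed[OF K ac])
  have x: "s \<otimes>\<^bsub>tlev S K\<^esub> \<phi> K a \<in> carrier (tlev S K)" using s pa by simp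
  have rr: "tres S M K r \<in> carrier (tlev S K)" by (rule S.res_closed[OF M K KM r])
  have c1: "ttr S K M (s \<otimes>\<^bsub>tlev S K\<^esub> \<phi> K a) \<in> carrier (tlev S M)"
    by (rule single_closed[OF A M K KM s a])
  have c2: "e \<in> carrier (tlev S M)" by (rule inE_carrier[OF A step.hyps(6)])
  have "r \<otimes>\<^bsub>tlev S M\<^esub> (ttr S K M (s \<otimes>\<^bsub>tlev S K\<^esub> \<phi> K a) \<oplus>\<^bsub>tlev S M\<^esub> e)
      = ttr S K M (s \<otimes>\<^bsub>tlev S K\<^esub> \<phi> K a) \<otimes>\<^bsub>tlev S M\<^esub> r \<oplus>\<^bsub>tlev S M\<^esub> r \<otimes>\<^bsub>tlev S M\<^esub> e"
    using r c1 c2 by (simp add: SM.r_distr SM.m_comm)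
  also have "ttr S K M (s \<otimes>\<^bsub>tlev S K\<^esub> \<phi> K a) \<otimes>\<^bsub>tlev S M\<^esub> r
      = ttr S K M ((s \<otimes>\<^bsub>tlev S K\<^esub> \<phi> K a) \<otimes>\<^bsub>tlev S K\<^esub> tres S M K r)"
    by (rule S.frob[OF M K KM x r, symmetric])
  also have "(s \<otimes>\<^bsub>tlev S K\<^esub> \<phi> K a) \<otimes>\<^bsub>tlev S K\<^esub> tres S M K r
      = (s \<otimes>\<^bsub>tlev S K\<^esub> tres S M K r) \<otimes>\<^bsub>tlev S K\<^esub> \<phi> K a"
    using s pa rr by (simp add: SK.m_ac)
  finally have eq: "r \<otimes>\<^bsub>tlev S M\<^esub> (ttr S K M (s \<otimes>\<^bsub>tlev S K\<^esub> \<phi> K a) \<oplus>\<^bsub>tlev S M\<^esub> e)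
      = ttr S K M ((s \<otimes>\<^bsub>tlev S K\<^esub> tres S M K r) \<otimes>\<^bsub>tlev S K\<^esub> \<phi> K a) \<oplus>\<^bsub>tlev S M\<^esub> r \<otimes>\<^bsub>tlev S M\<^esub> e" .
  have s': "s \<otimes>\<^bsub>tlev S K\<^esub> tres S M K r \<in> carrier (tlev S K)" using s rr by simp
  show ?case unfolding eq by (rule inE.step[OF M K KM s' a step.IH[OF r]])
qed


lemma inE_finsum:
  assumes A: "tideal G T A" and L: "subgroup L G" and f: "\<And>D. D \<in> I \<Longrightarrow> \<exists>n. inE A n L (f D)"
  shows "\<exists>n. inE A n L (finsum (tlev S L) f I)"
proof -
  interpret SL: cring "tlev S L" by (rule S.lev_cring[OF L])
  show ?thesis
  proof (cases "finite I")
    case False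
    then have "finsum (tlev S L) f I = \<zero>\<^bsub>tlev S L\<^esub>" by (rule SL.finsum_infinite)
    then show ?thesis using inE.zero[where A=A, OF L] by auto
  next
    case True
    then show ?thesis using f
    proof (induction I rule: finite_induct)
      case empty
      have "finsum (tlev S L) f {} = \<zero>\<^bsub>tlev S L\<^esub>" by (rule SL.finsum_empty)
      then show ?case using inE.zero[where A=A, OF L] by auto
    next
      case (insert x F)
      have fc: "f \<in> F \<rightarrow> carrier (tlev S L)"
        using insert.prems inE_carrier[OF A] by blast
      have fx: "f x \<in> carrier (tlev S L)" using insert.prems inE_carrier[OF A] by blast
      obtain n1 where n1: "inE A n1 L (f x)" using insert.prems by blast
      obtain n2 where n2: "inE A n2 L (finsum (tlev S L) f F)" using insert.IH insert.prems by blast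
      have "finsum (tlev S L) f (insert x F) = f x \<oplus>\<^bsub>tlev S L\<^esub> finsum (tlev S L) f F"
        by (rule SL.finsum_insert[OF insert.hyps(1,2) fc fx])
      then show ?case using inE_add[OF A n1 n2] by auto
    qed
  qed
qed

lemma inE_finprod:
  assumes A: "tideal G T A" and L: "subgroup L G" and fin: "finite I" and ne: "I \<noteq> {}"
    and f: "\<And>D. D \<in> I \<Longrightarrow> \<exists>n. inE A n L (f D)"
  shows "\<exists>n. inE A n L (finprod (tlev S L) f I)"
proof -
  interpret SL: cring "tlev S L" by (rule S.lev_cring[OF L])
  show ?thesis using fin ne f
  proof (induction I rule: finite_ne_induct)
    case (singleton x)
    have fx: "f x \<in> carrier (tlev S L)" using singleton.prems inE_carrier[OF A] by blast
    have "finprod (tlev S L) f {x} = f x" using fx by (simp add: SL.finprod_insert)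
    then show ?case using singleton.prems by simp
  next
    case (insert x F)
    have fc: "f \<in> F \<rightarrow> carrier (tlev S L)"
      using insert.prems inE_carrier[OF A] by blast
    have fx: "f x \<in> carrier (tlev S L)" using insert.prems inE_carrier[OF A] by blast
    obtain n2 where n2: "inE A n2 L (finprod (tlev S L) f F)" using insert.IH insert.prems by blast
    have "finprod (tlev S L) f (insert x F) = f x \<otimes>\<^bsub>tlev S L\<^esub> finprod (tlev S L) f F"
      by (rule SL.finprod_insert[OF insert.hyps(1,3) fc fx])
    then show ?case using inE_mult[OF A n2 fx] by auto
  qed
qed

lemma single_res:
  assumes A: "tideal G T A" and Y: "subgroup Y G" and W: "subgroup W G" and WY: "W \<subseteq> Y"
    and s: "s \<in> carrier (tlev S Y)" and a: "a \<in> A Y"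
  shows "tres S Y W (s \<otimes>\<^bsub>tlev S Y\<^esub> \<phi> Y a) = tres S Y W s \<otimes>\<^bsub>tlev S W\<^esub> \<phi> W (tres T Y W a)"
    and "tres S Y W s \<in> carrier (tlev S W)" and "tres T Y W a \<in> A W"
proof -
  have ac: "a \<in> carrier (tlev T Y)" using a T.tideal_carrier[OF A Y] by (rule subsetD[rotated])
  have pa: "\<phi> Y a \<in> carrier (tlev S Y)" by (rule phi_closed[OF Y ac])
  show "tres S Y W (s \<otimes>\<^bsub>tlev S Y\<^esub> \<phi> Y a) = tres S Y W s \<otimes>\<^bsub>tlev S W\<^esub> \<phi> W (tres T Y W a)"
    using S.res_mult[OF Y W WY s pa] phi_res[OF Y W WY ac] by simp
  show "tres S Y W s \<in> carrier (tlev S W)" by (rule S.res_closed[OF Y W WY s])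
  show "tres T Y W a \<in> A W" by (rule T.tideal_res[OF A Y W WY a])
qed

lemma single_cj:
  assumes A: "tideal G T A" and K: "subgroup K G" and g: "g \<in> carrier G"
    and s: "s \<in> carrier (tlev S K)" and a: "a \<in> A K"
  shows "tcj S g K (s \<otimes>\<^bsub>tlev S K\<^esub> \<phi> K a) = tcj S g K s \<otimes>\<^bsub>tlev S (conjs G g K)\<^esub> \<phi> (conjs G g K) (tcj T g K a)"
    and "tcj S g K s \<in> carrier (tlev S (conjs G g K))" and "tcj T g K a \<in> A (conjs G g K)"
proof -
  have ac: "a \<in> carrier (tlev T K)" using a T.tideal_carrier[OF A K] by (rule subsetD[rotated])
  have pa: "\<phi> K a \<in> carrier (tlev S K)" by (rule phi_closed[OF K ac])
  show "tcj S g K (s \<otimes>\<^bsub>tlev S K\<^esub> \<phi> K a) = tcj S g K s \<otimes>\<^bsub>tlev S (conjs G g K)\<^esub> \<phi> (conjs G g K) (tcj T g K a)"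
    using S.cj_mult[OF g K s pa] phi_cj[OF K g ac] by simp
  show "tcj S g K s \<in> carrier (tlev S (conjs G g K))" by (rule S.cj_closed[OF g K s])
  show "tcj T g K a \<in> A (conjs G g K)" by (rule T.tideal_cj[OF A K g a])
qed

lemma inE_res:
  assumes A: "tideal G T A" and L: "subgroup L G"
  shows "inE A n M e \<Longrightarrow> L \<subseteq> M \<Longrightarrow> \<exists>m. inE A m L (tres S M L e)"
proof (induction rule: inE.induct)
  case (zero M)
  have "tres S M L \<zero>\<^bsub>tlev S M\<^esub> = \<zero>\<^bsub>tlev S L\<^esub>" by (rule S.res_zero[OF zero.hyps L zero.prems])
  then show ?case using inE.zero[where A=A, OF L] by auto
next
  case (step M K s a n e)
  note M = step.hyps(1) and K = step.hyps(2) and KM = step.hyps(3) and s = step.hyps(4) and a = step.hyps(5)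
  note LM = step.prems
  interpret SK: cring "tlev S K" by (rule S.lev_cring[OF K])
  have ac: "a \<in> carrier (tlev T K)" using a T.tideal_carrier[OF A K] by (rule subsetD[rotated])
  have pa: "\<phi> K a \<in> carrier (tlev S K)" by (rule phi_closed[OF K ac])
  have x: "s \<otimes>\<^bsub>tlev S K\<^esub> \<phi> K a \<in> carrier (tlev S K)" using s pa by simp
  have c1: "ttr S K M (s \<otimes>\<^bsub>tlev S K\<^esub> \<phi> K a) \<in> carrier (tlev S M)"
    by (rule single_closed[OF A M K KM s a])
  have c2: "e \<in> carrier (tlev S M)" by (rule inE_carrier[OF A step.hyps(6)])
  have eq: "tres S M L (ttr S K M (s \<otimes>\<^bsub>tlev S K\<^esub> \<phi> K a) \<oplus>\<^bsub>tlev S M\<^esub> e)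
      = tres S M L (ttr S K M (s \<otimes>\<^bsub>tlev S K\<^esub> \<phi> K a)) \<oplus>\<^bsub>tlev S L\<^esub> tres S M L e"
    by (rule S.res_add[OF M L LM c1 c2])
  have "\<exists>m. inE A m L (tres S M L (ttr S K M (s \<otimes>\<^bsub>tlev S K\<^esub> \<phi> K a)))"
    unfolding S.mackey_tr[OF M K L KM LM x] mackey_tr_rhs_def
  proof (rule inE_finsum[OF A L])
    fix D assume D: "D \<in> dcosets G L M K"
    define g where "g = rep D"
    have gM: "g \<in> M" unfolding g_def by (rule T.rep_dcos[OF L M K LM KM D])
    have g: "g \<in> carrier G" using gM subgroup.subset[OF M] by (rule subsetD[rotated])
    define Y where "Y = conjs G g K"
    define W where "W = L \<inter> Y"
    have Y: "subgroup Y G" unfolding Y_def by (rule T.conjs_subgroup[OF g K])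
    have W: "subgroup W G" unfolding W_def by (rule T.subgroups_Inter_pair[OF L Y])
    have WY: "W \<subseteq> Y" unfolding W_def by blast
    have WL: "W \<subseteq> L" unfolding W_def by blast
    note c = single_cj[OF A K g s a, folded Y_def]
    note r = single_res[OF A Y W WY c(2,3)]
    have "\<exists>n. inE A n L (ttr S W L (tres S Y W (tcj S g K s) \<otimes>\<^bsub>tlev S W\<^esub> \<phi> W (tres T Y W (tcj T g K a))))"
      using inE_single[OF A L W WL r(2,3)] by blast
    then show "\<exists>n. inE A n L (let g = rep D in ttr S (L \<inter> conjs G g K) L
            (tres S (conjs G g K) (L \<inter> conjs G g K) (tcj S g K (s \<otimes>\<^bsub>tlev S K\<^esub> \<phi> K a))))"
      unfolding Let_def g_def[symmetric] Y_def[symmetric] W_def[symmetric] c(1) r(1) .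
  qed
  then obtain m1 where m1: "inE A m1 L (tres S M L (ttr S K M (s \<otimes>\<^bsub>tlev S K\<^esub> \<phi> K a)))" by blast
  obtain m2 where m2: "inE A m2 L (tres S M L e)" using step.IH[OF LM] by blast
  show ?case unfolding eq using inE_add[OF A m1 m2] by blast
qed

end


lemma rep_in': "D \<noteq> {} \<Longrightarrow> rep D \<in> D"
  unfolding rep_def by (rule someI_ex) blast

context group begin

lemma sact_mult:
  assumes a: "a \<in> carrier G" and b: "b \<in> carrier G" and B: "\<And>C. C \<in> B \<Longrightarrow> C \<subseteq> carrier G"
  shows "sact G a (sact G b B) = sact G (a \<otimes> b) B"
proof -
  have "\<And>C. C \<in> B \<Longrightarrow> lcos G a (lcos G b C) = lcos G (a \<otimes> b) C"
    using lcos_mult[OF a b B] .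
  then show ?thesis unfolding sact_def image_image by (rule image_cong[OF refl])
qed

lemma sact_one:
  assumes B: "\<And>C. C \<in> B \<Longrightarrow> C \<subseteq> carrier G"
  shows "sact G \<one> B = B"
proof -
  have "\<And>C. C \<in> B \<Longrightarrow> lcos G \<one> C = id C" using lcos_one[OF B] by simp
  then have "sact G \<one> B = id ` B" unfolding sact_def by (rule image_cong[OF refl])
  then show ?thesis by simp
qed

lemma stab_subgroup:
  assumes M: "subgroup M G" and B: "\<And>C. C \<in> B \<Longrightarrow> C \<subseteq> carrier G"
  shows "subgroup {h \<in> M. sact G h B = B} G"
proof (rule subgroupI)
  have MC: "M \<subseteq> carrier G" by (rule subgroup.subset[OF M])
  show "{h \<in> M. sact G h B = B} \<subseteq> carrier G" using MC by blast
  have "\<one> \<in> M" by (rule subgroup.one_closed[OF M])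
  then show "{h \<in> M. sact G h B = B} \<noteq> {}" using sact_one[OF B] by blast
next
  have MC: "M \<subseteq> carrier G" by (rule subgroup.subset[OF M])
  fix a assume "a \<in> {h \<in> M. sact G h B = B}"
  then have aM: "a \<in> M" and aB: "sact G a B = B" by simp_all
  have ac: "a \<in> carrier G" using aM MC by (rule subsetD[rotated])
  have "inv a \<in> M" by (rule subgroup.m_inv_closed[OF M aM])
  moreover have "sact G (inv a) B = B"
  proof -
    have "sact G (inv a) B = sact G (inv a) (sact G a B)" using aB by simp
    also have "\<dots> = sact G (inv a \<otimes> a) B" by (rule sact_mult[OF inv_closed[OF ac] ac B])
    also have "\<dots> = B" using ac sact_one[OF B] by simp
    finally show ?thesis .
  qed
  ultimately show "inv a \<in> {h \<in> M. sact G h B = B}" by simp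
next
  have MC: "M \<subseteq> carrier G" by (rule subgroup.subset[OF M])
  fix a b assume "a \<in> {h \<in> M. sact G h B = B}" "b \<in> {h \<in> M. sact G h B = B}"
  then have aM: "a \<in> M" and aB: "sact G a B = B" and bM: "b \<in> M" and bB: "sact G b B = B" by simp_all
  have ac: "a \<in> carrier G" using aM MC by (rule subsetD[rotated])
  have bc: "b \<in> carrier G" using bM MC by (rule subsetD[rotated])
  have "a \<otimes> b \<in> M" by (rule subgroup.m_closed[OF M aM bM])
  moreover have "sact G (a \<otimes> b) B = B"
    using sact_mult[OF ac bc B, symmetric] aB bB by simp
  ultimately show "a \<otimes> b \<in> {h \<in> M. sact G h B = B}" by simp
qed

lemma cosetsH_carrier:
  assumes M: "subgroup M G" and K: "subgroup K G" and C: "C \<in> cosetsH G M K"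
  shows "C \<subseteq> carrier G"
proof -
  obtain c where c: "c \<in> M" "C = lcos G c K" using C unfolding cosetsH_def by blast
  have cc: "c \<in> carrier G" using c(1) subgroup.subset[OF M] by (rule subsetD[rotated])
  show ?thesis unfolding c(2) by (rule lcos_carrier[OF cc subgroup.subset[OF K]])
qed

lemma cosetsH_lcos:
  assumes M: "subgroup M G" and K: "subgroup K G" and h: "h \<in> M" and C: "C \<in> cosetsH G M K"
  shows "lcos G h C \<in> cosetsH G M K"
proof -
  obtain c where c: "c \<in> M" "C = lcos G c K" using C unfolding cosetsH_def by blast
  have cc: "c \<in> carrier G" using c(1) subgroup.subset[OF M] by (rule subsetD[rotated])
  have hc: "h \<in> carrier G" using h subgroup.subset[OF M] by (rule subsetD[rotated])
  have "lcos G h C = lcos G (h \<otimes> c) K" unfolding c(2) by (rule lcos_mult[OF hc cc subgroup.subset[OF K]])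
  moreover have "h \<otimes> c \<in> M" by (rule subgroup.m_closed[OF M h c(1)])
  ultimately show ?thesis unfolding cosetsH_def by blast
qed

lemma lcos_in_cosetsH: "h \<in> M \<Longrightarrow> lcos G h K \<in> cosetsH G M K"
  unfolding cosetsH_def by blast

lemma orbit_rep_sact:
  assumes M: "subgroup M G" and K: "subgroup K G" and A0: "A0 \<subseteq> cosetsH G M K"
    and Orb: "Orb = {sact G h A0 | h. h \<in> M}"
  shows "\<And>C. C \<in> rep Orb \<Longrightarrow> C \<subseteq> carrier G"
proof -
  have "sact G \<one> A0 \<in> Orb" unfolding Orb using subgroup.one_closed[OF M] by blast
  then have "Orb \<noteq> {}" by blast
  then have "rep Orb \<in> Orb" by (rule rep_in')
  then obtain h0 where h0: "h0 \<in> M" "rep Orb = sact G h0 A0" unfolding Orb by blast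
  have hc: "h0 \<in> carrier G" using h0(1) subgroup.subset[OF M] by (rule subsetD[rotated])
  fix C assume "C \<in> rep Orb"
  then obtain C0 where C0: "C0 \<in> A0" "C = lcos G h0 C0" unfolding h0(2) sact_def by blast
  have "C0 \<subseteq> carrier G" using C0(1) A0 cosetsH_carrier[OF M K] by blast
  then show "C \<subseteq> carrier G" unfolding C0(2) by (rule lcos_carrier[OF hc])
qed

definition goodsec :: "'a set \<Rightarrow> 'a set \<Rightarrow> 'a set \<Rightarrow> ('a set \<Rightarrow> 'a set) \<Rightarrow> bool" where
  "goodsec M K K' \<sigma> \<longleftrightarrow> (\<forall>C. C \<notin> cosetsH G M K \<longrightarrow> \<sigma> C = {}) \<and>
     (\<forall>C\<in>cosetsH G M K. \<exists>z\<in>M. \<sigma> C = lcos G z K')"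

lemma goodsec_carrier:
  assumes M: "subgroup M G" and K': "subgroup K' G" and g: "goodsec M K K' \<sigma>"
  shows "\<sigma> C \<subseteq> carrier G"
proof (cases "C \<in> cosetsH G M K")
  case True
  then obtain z where z: "z \<in> M" "\<sigma> C = lcos G z K'" using g unfolding goodsec_def by blast
  have zc: "z \<in> carrier G" using z(1) subgroup.subset[OF M] by (rule subsetD[rotated])
  show ?thesis unfolding z(2) by (rule lcos_carrier[OF zc subgroup.subset[OF K']])
next
  case False
  then show ?thesis using g unfolding goodsec_def by simp
qed

lemma rep_orbit_sec:
  assumes M: "subgroup M G" and K: "subgroup K G" and K': "subgroup K' G"
    and s0: "s0 \<in> sections G M K K'" and Orb: "Orb = {secact G M K h s0 | h. h \<in> M}"
  shows "goodsec M K K' (rep Orb)"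
proof -
  have MC: "M \<subseteq> carrier G" by (rule subgroup.subset[OF M])
  have "secact G M K \<one> s0 \<in> Orb" unfolding Orb using subgroup.one_closed[OF M] by blast
  then have "Orb \<noteq> {}" by blast
  then have "rep Orb \<in> Orb" by (rule rep_in')
  then obtain h0 where h0: "h0 \<in> M" "rep Orb = secact G M K h0 s0" unfolding Orb by blast
  have hc: "h0 \<in> carrier G" using h0(1) MC by (rule subsetD[rotated])
  have ihM: "inv h0 \<in> M" by (rule subgroup.m_inv_closed[OF M h0(1)])
  show ?thesis unfolding goodsec_def
  proof (intro conjI allI impI ballI)
    fix C assume "C \<notin> cosetsH G M K"
    then show "rep Orb C = {}" unfolding h0(2) secact_def by simp
  next
    fix C assume C: "C \<in> cosetsH G M K"
    have C1: "lcos G (inv h0) C \<in> cosetsH G M K" by (rule cosetsH_lcos[OF M K ihM C])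
    then have "s0 (lcos G (inv h0) C) \<in> cosetsH G M K'" using s0 unfolding sections_def by blast
    then obtain y where y: "y \<in> M" "s0 (lcos G (inv h0) C) = lcos G y K'" unfolding cosetsH_def by blast
    have yc: "y \<in> carrier G" using y(1) MC by (rule subsetD[rotated])
    have "rep Orb C = lcos G h0 (lcos G y K')" unfolding h0(2) secact_def using C y(2) by simp
    also have "\<dots> = lcos G (h0 \<otimes> y) K'" by (rule lcos_mult[OF hc yc subgroup.subset[OF K']])
    finally have "rep Orb C = lcos G (h0 \<otimes> y) K'" .
    moreover have "h0 \<otimes> y \<in> M" by (rule subgroup.m_closed[OF M h0(1) y(1)])
    ultimately show "\<exists>z\<in>M. rep Orb C = lcos G z K'" by blast
  qed
qed

lemma secact_mult:
  assumes M: "subgroup M G" and K: "subgroup K G" and K': "subgroup K' G" and g: "goodsec M K K' \<sigma>"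
    and h1: "h1 \<in> M" and h2: "h2 \<in> M"
  shows "secact G M K h1 (secact G M K h2 \<sigma>) = secact G M K (h1 \<otimes> h2) \<sigma>"
proof (rule ext)
  have MC: "M \<subseteq> carrier G" by (rule subgroup.subset[OF M])
  have c1: "h1 \<in> carrier G" using h1 MC by (rule subsetD[rotated])
  have c2: "h2 \<in> carrier G" using h2 MC by (rule subsetD[rotated])
  fix C show "secact G M K h1 (secact G M K h2 \<sigma>) C = secact G M K (h1 \<otimes> h2) \<sigma> C"
  proof (cases "C \<in> cosetsH G M K")
    case False then show ?thesis unfolding secact_def by simp
  next
    case True
    have i1: "inv h1 \<in> M" by (rule subgroup.m_inv_closed[OF M h1])
    have C1: "lcos G (inv h1) C \<in> cosetsH G M K" by (rule cosetsH_lcos[OF M K i1 True])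
    have CC: "C \<subseteq> carrier G" by (rule cosetsH_carrier[OF M K True])
    have "lcos G (inv h2) (lcos G (inv h1) C) = lcos G (inv h2 \<otimes> inv h1) C"
      by (rule lcos_mult[OF inv_closed[OF c2] inv_closed[OF c1] CC])
    also have "inv h2 \<otimes> inv h1 = inv (h1 \<otimes> h2)" using c1 c2 by (simp add: inv_mult_group)
    finally have e1: "lcos G (inv h2) (lcos G (inv h1) C) = lcos G (inv (h1 \<otimes> h2)) C" .
    have sc: "\<sigma> (lcos G (inv (h1 \<otimes> h2)) C) \<subseteq> carrier G" by (rule goodsec_carrier[OF M K' g])
    have "secact G M K h1 (secact G M K h2 \<sigma>) C = lcos G h1 (lcos G h2 (\<sigma> (lcos G (inv h2) (lcos G (inv h1) C))))"
      unfolding secact_def using True C1 by simp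
    also have "\<dots> = lcos G (h1 \<otimes> h2) (\<sigma> (lcos G (inv (h1 \<otimes> h2)) C))"
      unfolding e1 by (rule lcos_mult[OF c1 c2 sc])
    also have "\<dots> = secact G M K (h1 \<otimes> h2) \<sigma> C" unfolding secact_def using True by simp
    finally show ?thesis .
  qed
qed

lemma secact_one:
  assumes M: "subgroup M G" and K: "subgroup K G" and K': "subgroup K' G" and g: "goodsec M K K' \<sigma>"
  shows "secact G M K \<one> \<sigma> = \<sigma>"
proof (rule ext)
  fix C show "secact G M K \<one> \<sigma> C = \<sigma> C"
  proof (cases "C \<in> cosetsH G M K")
    case False then show ?thesis using g unfolding secact_def goodsec_def by simp
  next
    case True
    have CC: "C \<subseteq> carrier G" by (rule cosetsH_carrier[OF M K True])
    have sc: "\<sigma> C \<subseteq> carrier G" by (rule goodsec_carrier[OF M K' g])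
    show ?thesis unfolding secact_def using True lcos_one[OF CC] lcos_one[OF sc] by simp
  qed
qed

lemma sstab_subgroup:
  assumes M: "subgroup M G" and K: "subgroup K G" and K': "subgroup K' G" and g: "goodsec M K K' \<sigma>"
  shows "subgroup {h \<in> M. secact G M K h \<sigma> = \<sigma>} G"
proof (rule subgroupI)
  have MC: "M \<subseteq> carrier G" by (rule subgroup.subset[OF M])
  show "{h \<in> M. secact G M K h \<sigma> = \<sigma>} \<subseteq> carrier G" using MC by blast
  have "\<one> \<in> M" by (rule subgroup.one_closed[OF M])
  then show "{h \<in> M. secact G M K h \<sigma> = \<sigma>} \<noteq> {}" using secact_one[OF M K K' g] by blast
next
  have MC: "M \<subseteq> carrier G" by (rule subgroup.subset[OF M])
  fix a assume "a \<in> {h \<in> M. secact G M K h \<sigma> = \<sigma>}"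
  then have aM: "a \<in> M" and aB: "secact G M K a \<sigma> = \<sigma>" by simp_all
  have ac: "a \<in> carrier G" using aM MC by (rule subsetD[rotated])
  have iM: "inv a \<in> M" by (rule subgroup.m_inv_closed[OF M aM])
  moreover have "secact G M K (inv a) \<sigma> = \<sigma>"
  proof -
    have "secact G M K (inv a) \<sigma> = secact G M K (inv a) (secact G M K a \<sigma>)" using aB by simp
    also have "\<dots> = secact G M K (inv a \<otimes> a) \<sigma>" by (rule secact_mult[OF M K K' g iM aM])
    also have "\<dots> = \<sigma>" using ac secact_one[OF M K K' g] by simp
    finally show ?thesis .
  qed
  ultimately show "inv a \<in> {h \<in> M. secact G M K h \<sigma> = \<sigma>}" by simp
next
  fix a b assume "a \<in> {h \<in> M. secact G M K h \<sigma> = \<sigma>}" "b \<in> {h \<in> M. secact G M K h \<sigma> = \<sigma>}"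
  then have aM: "a \<in> M" and aB: "secact G M K a \<sigma> = \<sigma>" and bM: "b \<in> M" and bB: "secact G M K b \<sigma> = \<sigma>" by simp_all
  have "a \<otimes> b \<in> M" by (rule subgroup.m_closed[OF M aM bM])
  moreover have "secact G M K (a \<otimes> b) \<sigma> = \<sigma>"
    using secact_mult[OF M K K' g aM bM, symmetric] aB bB by simp
  ultimately show "a \<otimes> b \<in> {h \<in> M. secact G M K h \<sigma> = \<sigma>}" by simp
qed

lemma sstab_incl:
  assumes M: "subgroup M G" and K: "subgroup K G" and K': "subgroup K' G" and g: "goodsec M K K' \<sigma>"
    and hM: "h \<in> M"
  shows "rep (\<sigma> (lcos G h K)) \<in> carrier G"
    and "{x \<in> M. secact G M K x \<sigma> = \<sigma>} \<inter> conjs G h K \<subseteq> conjs G (rep (\<sigma> (lcos G h K))) K'"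
proof -
  have MC: "M \<subseteq> carrier G" by (rule subgroup.subset[OF M])
  have hc: "h \<in> carrier G" using hM MC by (rule subsetD[rotated])
  have C: "lcos G h K \<in> cosetsH G M K" by (rule lcos_in_cosetsH[OF hM])
  obtain z where z: "z \<in> M" "\<sigma> (lcos G h K) = lcos G z K'" using g C unfolding goodsec_def by blast
  have zc: "z \<in> carrier G" using z(1) MC by (rule subsetD[rotated])
  have "z \<in> \<sigma> (lcos G h K)" unfolding z(2) by (rule lcos_self[OF K' zc])
  then have "\<sigma> (lcos G h K) \<noteq> {}" by blast
  then have hr: "rep (\<sigma> (lcos G h K)) \<in> \<sigma> (lcos G h K)" by (rule rep_in')
  then show h'c: "rep (\<sigma> (lcos G h K)) \<in> carrier G" using goodsec_carrier[OF M K' g] by blast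
  define h' where "h' = rep (\<sigma> (lcos G h K))"
  have h'c2: "h' \<in> carrier G" unfolding h'_def by (rule h'c)
  have eqz: "lcos G h' K' = lcos G z K'" unfolding h'_def using hr unfolding z(2) by (rule lcos_mem_eq[OF K' zc])
  have sig: "\<sigma> (lcos G h K) = lcos G h' K'" using z(2) eqz by simp
  show "{x \<in> M. secact G M K x \<sigma> = \<sigma>} \<inter> conjs G h K \<subseteq> conjs G (rep (\<sigma> (lcos G h K))) K'"
    unfolding h'_def[symmetric]
  proof
    fix x assume x: "x \<in> {x \<in> M. secact G M K x \<sigma> = \<sigma>} \<inter> conjs G h K"
    then have xM: "x \<in> M" and xs: "secact G M K x \<sigma> = \<sigma>" and xk: "x \<in> conjs G h K" by simp_all
    have xc: "x \<in> carrier G" using xM MC by (rule subsetD[rotated])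
    obtain k where k: "k \<in> K" "x = h \<otimes> k \<otimes> inv h" using xk unfolding conjs_def by blast
    have kc: "k \<in> carrier G" using k(1) subgroup.subset[OF K] by (rule subsetD[rotated])
    have ikK: "inv k \<in> K" by (rule subgroup.m_inv_closed[OF K k(1)])
    have "inv x \<otimes> h = h \<otimes> inv k"
      unfolding k(2) using hc kc by (simp add: inv_mult_group m_assoc)
    then have "lcos G (inv x) (lcos G h K) = lcos G (h \<otimes> inv k) K"
      using lcos_mult[OF inv_closed[OF xc] hc subgroup.subset[OF K]] by simp
    also have "\<dots> = lcos G h K" by (rule lcos_absorb[OF K hc ikK])
    finally have fix1: "lcos G (inv x) (lcos G h K) = lcos G h K" .
    have "\<sigma> (lcos G h K) = secact G M K x \<sigma> (lcos G h K)" using xs by simp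
    also have "\<dots> = lcos G x (\<sigma> (lcos G h K))" unfolding secact_def using C fix1 by simp
    finally have "lcos G h' K' = lcos G x (lcos G h' K')" unfolding sig .
    also have "\<dots> = lcos G (x \<otimes> h') K'" by (rule lcos_mult[OF xc h'c2 subgroup.subset[OF K']])
    finally show "x \<in> conjs G h' K'" by (intro lcos_fix_conj[OF K' h'c2 xc]) simp
  qed
qed

end


context tmorph begin

lemma inE_0D: "inE A 0 K e \<Longrightarrow> e = \<zero>\<^bsub>tlev S K\<^esub>"
  by (erule inE.cases) simp_all

lemma inE_SucD: "inE A (Suc n) K e \<Longrightarrow> \<exists>K0 s a e'. subgroup K G \<and> subgroup K0 G \<and> K0 \<subseteq> K \<and>
   s \<in> carrier (tlev S K0) \<and> a \<in> A K0 \<and> inE A n K e' \<and> e = ttr S K0 K (s \<otimes>\<^bsub>tlev S K0\<^esub> \<phi> K0 a) \<oplus>\<^bsub>tlev S K\<^esub> e'"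
  by (erule inE.cases) blast+

lemma inE_1D:
  assumes A: "tideal G T A" and e: "inE A (Suc 0) K e"
  shows "\<exists>K0 s a. subgroup K0 G \<and> K0 \<subseteq> K \<and>
   s \<in> carrier (tlev S K0) \<and> a \<in> A K0 \<and> e = ttr S K0 K (s \<otimes>\<^bsub>tlev S K0\<^esub> \<phi> K0 a)"
proof -
  obtain K0 s a e' where h: "subgroup K G" "subgroup K0 G" "K0 \<subseteq> K"
   "s \<in> carrier (tlev S K0)" "a \<in> A K0" "inE A 0 K e'" "e = ttr S K0 K (s \<otimes>\<^bsub>tlev S K0\<^esub> \<phi> K0 a) \<oplus>\<^bsub>tlev S K\<^esub> e'"
    using inE_SucD[OF e] by blast
  interpret SK: cring "tlev S K" by (rule S.lev_cring[OF h(1)])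
  have "e' = \<zero>\<^bsub>tlev S K\<^esub>" by (rule inE_0D[OF h(6)])
  moreover have "ttr S K0 K (s \<otimes>\<^bsub>tlev S K0\<^esub> \<phi> K0 a) \<in> carrier (tlev S K)"
    by (rule single_closed[OF A h(1-5)])
  ultimately have "e = ttr S K0 K (s \<otimes>\<^bsub>tlev S K0\<^esub> \<phi> K0 a)" using h(7) by simp
  then show ?thesis using h(2-5) by blast
qed

lemma finite_dcosets: "subgroup M G \<Longrightarrow> finite (dcosets G L M K)"
proof -
  assume M: "subgroup M G"
  have "finite M" using T.fin subgroup.subset[OF M] by (rule finite_subset[rotated])
  moreover have "dcosets G L M K = (\<lambda>h. dcos G L h K) ` M" unfolding dcosets_def by blast
  ultimately show ?thesis by simp
qed

lemma ne_dcosets: "subgroup M G \<Longrightarrow> dcosets G L M K \<noteq> {}"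
  unfolding dcosets_def using subgroup.one_closed by blast

lemma inE_nm_single:
  assumes A: "tideal G T A" and M: "subgroup M G" and K: "subgroup K G" and KM: "K \<subseteq> M"
    and e: "inE A (Suc 0) K e"
  shows "\<exists>m. inE A m M (tnm S K M e)"
proof -
  obtain K' u a where h: "subgroup K' G" "K' \<subseteq> K" "u \<in> carrier (tlev S K')" "a \<in> A K'"
    "e = ttr S K' K (u \<otimes>\<^bsub>tlev S K'\<^esub> \<phi> K' a)" using inE_1D[OF A e] by blast
  note K' = h(1) and K'K = h(2) and u = h(3) and a = h(4)
  interpret SK': cring "tlev S K'" by (rule S.lev_cring[OF K'])
  have ac: "a \<in> carrier (tlev T K')" using a T.tideal_carrier[OF A K'] by (rule subsetD[rotated])
  have pa: "\<phi> K' a \<in> carrier (tlev S K')" by (rule phi_closed[OF K' ac])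
  have x: "u \<otimes>\<^bsub>tlev S K'\<^esub> \<phi> K' a \<in> carrier (tlev S K')" using u pa by simp
  have MC: "M \<subseteq> carrier G" by (rule subgroup.subset[OF M])
  show ?thesis
    unfolding h(5) S.nm_tr[OF M K K' K'K KM x] nm_tr_rhs_def
  proof (rule inE_finsum[OF A M])
    fix Orb assume "Orb \<in> {{secact G M K h s | h. h \<in> M} | s. s \<in> sections G M K K'}"
    then obtain s0 where s0: "s0 \<in> sections G M K K'" "Orb = {secact G M K h s0 | h. h \<in> M}" by blast
    define \<sigma> where "\<sigma> = rep Orb"
    have gs: "T.goodsec M K K' \<sigma>" unfolding \<sigma>_def by (rule T.rep_orbit_sec[OF M K K' s0])
    define Hs where "Hs = {h \<in> M. secact G M K h \<sigma> = \<sigma>}"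
    have Hs: "subgroup Hs G" unfolding Hs_def by (rule T.sstab_subgroup[OF M K K' gs])
    have HsM: "Hs \<subseteq> M" unfolding Hs_def by blast
    have "\<exists>n. inE A n Hs (finprod (tlev S Hs) (\<lambda>D. let h = rep D; h' = rep (\<sigma> (lcos G h K)) in
              tnm S (Hs \<inter> conjs G h K) Hs
               (tres S (conjs G h' K') (Hs \<inter> conjs G h K) (tcj S h' K' (u \<otimes>\<^bsub>tlev S K'\<^esub> \<phi> K' a))))
             (dcosets G Hs M K))"
    proof (rule inE_finprod[OF A Hs finite_dcosets[OF M] ne_dcosets[OF M]])
      fix D assume D: "D \<in> dcosets G Hs M K"
      define h where "h = rep D"
      have hM: "h \<in> M" unfolding h_def by (rule T.rep_dcos[OF Hs M K HsM KM D])
      have hc: "h \<in> carrier G" using hM MC by (rule subsetD[rotated])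
      define h' where "h' = rep (\<sigma> (lcos G h K))"
      have h'c: "h' \<in> carrier G" unfolding h'_def by (rule T.sstab_incl(1)[OF M K K' gs hM])
      have incl: "Hs \<inter> conjs G h K \<subseteq> conjs G h' K'" unfolding h'_def Hs_def by (rule T.sstab_incl(2)[OF M K K' gs hM])
      define Y where "Y = conjs G h' K'"
      define W where "W = Hs \<inter> conjs G h K"
      have Y: "subgroup Y G" unfolding Y_def by (rule T.conjs_subgroup[OF h'c K'])
      have W: "subgroup W G" unfolding W_def by (rule T.subgroups_Inter_pair[OF Hs T.conjs_subgroup[OF hc K]])
      have WY: "W \<subseteq> Y" unfolding W_def Y_def by (rule incl)
      have WH: "W \<subseteq> Hs" unfolding W_def by blast
      note c = single_cj[OF A K' h'c u a, folded Y_def]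
      note r = single_res[OF A Y W WY c(2,3)]
      interpret SW: cring "tlev S W" by (rule S.lev_cring[OF W])
      interpret SHs: cring "tlev S Hs" by (rule S.lev_cring[OF Hs])
      have ac2: "tres T Y W (tcj T h' K' a) \<in> carrier (tlev T W)"
        using r(3) T.tideal_carrier[OF A W] by (rule subsetD[rotated])
      have pa2: "\<phi> W (tres T Y W (tcj T h' K' a)) \<in> carrier (tlev S W)" by (rule phi_closed[OF W ac2])
      have "tnm S W Hs (tres S Y W (tcj S h' K' (u \<otimes>\<^bsub>tlev S K'\<^esub> \<phi> K' a)))
          = tnm S W Hs (tres S Y W (tcj S h' K' u)) \<otimes>\<^bsub>tlev S Hs\<^esub> tnm S W Hs (\<phi> W (tres T Y W (tcj T h' K' a)))"
        unfolding c(1) r(1) by (rule S.nm_mult[OF Hs W WH r(2) pa2])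
      also have "tnm S W Hs (\<phi> W (tres T Y W (tcj T h' K' a))) = \<phi> Hs (tnm T W Hs (tres T Y W (tcj T h' K' a)))"
        by (rule phi_nm[OF Hs W WH ac2, symmetric])
      finally have eq: "tnm S W Hs (tres S Y W (tcj S h' K' (u \<otimes>\<^bsub>tlev S K'\<^esub> \<phi> K' a)))
          = tnm S W Hs (tres S Y W (tcj S h' K' u)) \<otimes>\<^bsub>tlev S Hs\<^esub> \<phi> Hs (tnm T W Hs (tres T Y W (tcj T h' K' a)))" .
      have s3: "tnm S W Hs (tres S Y W (tcj S h' K' u)) \<in> carrier (tlev S Hs)" by (rule S.nm_closed[OF Hs W WH r(2)])
      have a3: "tnm T W Hs (tres T Y W (tcj T h' K' a)) \<in> A Hs" by (rule T.tideal_nm[OF A Hs W WH r(3)])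
      have a3c: "tnm T W Hs (tres T Y W (tcj T h' K' a)) \<in> carrier (tlev T Hs)"
        using a3 T.tideal_carrier[OF A Hs] by (rule subsetD[rotated])
      have pa3: "\<phi> Hs (tnm T W Hs (tres T Y W (tcj T h' K' a))) \<in> carrier (tlev S Hs)" by (rule phi_closed[OF Hs a3c])
      have "inE A 1 Hs (ttr S Hs Hs (tnm S W Hs (tres S Y W (tcj S h' K' u)) \<otimes>\<^bsub>tlev S Hs\<^esub> \<phi> Hs (tnm T W Hs (tres T Y W (tcj T h' K' a)))))"
        by (rule inE_single[OF A Hs Hs order_refl s3 a3])
      moreover have "ttr S Hs Hs (tnm S W Hs (tres S Y W (tcj S h' K' u)) \<otimes>\<^bsub>tlev S Hs\<^esub> \<phi> Hs (tnm T W Hs (tres T Y W (tcj T h' K' a))))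
          = tnm S W Hs (tres S Y W (tcj S h' K' u)) \<otimes>\<^bsub>tlev S Hs\<^esub> \<phi> Hs (tnm T W Hs (tres T Y W (tcj T h' K' a)))"
        using s3 pa3 by (intro S.tr_id[OF Hs]) simp
      ultimately have "\<exists>n. inE A n Hs (tnm S W Hs (tres S Y W (tcj S h' K' (u \<otimes>\<^bsub>tlev S K'\<^esub> \<phi> K' a))))"
        unfolding eq by auto
      then show "\<exists>n. inE A n Hs (let h = rep D; h' = rep (\<sigma> (lcos G h K)) in
              tnm S (Hs \<inter> conjs G h K) Hs
               (tres S (conjs G h' K') (Hs \<inter> conjs G h K) (tcj S h' K' (u \<otimes>\<^bsub>tlev S K'\<^esub> \<phi> K' a))))"
        unfolding Let_def h_def[symmetric] h'_def[symmetric] Y_def[symmetric] W_def[symmetric] .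
    qed
    then obtain n where n: "inE A n Hs (finprod (tlev S Hs) (\<lambda>D. let h = rep D; h' = rep (\<sigma> (lcos G h K)) in
              tnm S (Hs \<inter> conjs G h K) Hs
               (tres S (conjs G h' K') (Hs \<inter> conjs G h K) (tcj S h' K' (u \<otimes>\<^bsub>tlev S K'\<^esub> \<phi> K' a))))
             (dcosets G Hs M K))" by blast
    show "\<exists>n. inE A n M (let s = rep Orb; Hs = {h \<in> M. secact G M K h s = s} in
          ttr S Hs M (finprod (tlev S Hs) (\<lambda>D. let h = rep D; h' = rep (s (lcos G h K)) in
              tnm S (Hs \<inter> conjs G h K) Hs
               (tres S (conjs G h' K') (Hs \<inter> conjs G h K) (tcj S h' K' (u \<otimes>\<^bsub>tlev S K'\<^esub> \<phi> K' a))))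
             (dcosets G Hs M K)))"
      using inE_tr[OF A M n HsM] unfolding Let_def \<sigma>_def[symmetric] Hs_def[symmetric] by blast
  qed
qed


lemma nm_step:
  assumes A: "tideal G T A" and M: "subgroup M G"
    and IHout: "\<And>M' K' n' e'. subgroup M' G \<Longrightarrow> M' \<subseteq> M \<Longrightarrow> M' \<noteq> M \<Longrightarrow> subgroup K' G \<Longrightarrow> K' \<subseteq> M' \<Longrightarrow>
        inE A n' K' e' \<Longrightarrow> \<exists>m. inE A m M' (tnm S K' M' e')"
    and IHin: "\<And>K' e'. subgroup K' G \<Longrightarrow> K' \<subseteq> M \<Longrightarrow> inE A n K' e' \<Longrightarrow> \<exists>m. inE A m M (tnm S K' M e')"
    and K: "subgroup K G" and KM: "K \<subseteq> M" and K0: "subgroup K0 G" and K0K: "K0 \<subseteq> K"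
    and u: "u \<in> carrier (tlev S K0)" and a: "a \<in> A K0" and e': "inE A n K e'"
  shows "\<exists>m. inE A m M (tnm S K M (ttr S K0 K (u \<otimes>\<^bsub>tlev S K0\<^esub> \<phi> K0 a) \<oplus>\<^bsub>tlev S K\<^esub> e'))"
proof -
  define t where "t = ttr S K0 K (u \<otimes>\<^bsub>tlev S K0\<^esub> \<phi> K0 a)"
  have t1: "inE A 1 K t" unfolding t_def by (rule inE_single[OF A K K0 K0K u a])
  have tc: "t \<in> carrier (tlev S K)" by (rule inE_carrier[OF A t1])
  have ec: "e' \<in> carrier (tlev S K)" by (rule inE_carrier[OF A e'])
  have MC: "M \<subseteq> carrier G" by (rule subgroup.subset[OF M])
  show ?thesis
    unfolding t_def[symmetric] S.nm_sum[OF M K KM tc ec] nm_sum_rhs_def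
  proof (rule inE_finsum[OF A M])
    fix Orb assume "Orb \<in> {{sact G h B | h. h \<in> M} | B. B \<subseteq> cosetsH G M K}"
    then obtain B0 where B0: "B0 \<subseteq> cosetsH G M K" "Orb = {sact G h B0 | h. h \<in> M}" by blast
    define B where "B = rep Orb"
    have BC: "\<And>C. C \<in> B \<Longrightarrow> C \<subseteq> carrier G" unfolding B_def by (rule T.orbit_rep_sact[OF M K B0])
    define HB where "HB = {h \<in> M. sact G h B = B}"
    have HB: "subgroup HB G" unfolding HB_def by (rule T.stab_subgroup[OF M BC])
    have HBM: "HB \<subseteq> M" unfolding HB_def by blast
    have "\<exists>n. inE A n HB (finprod (tlev S HB) (\<lambda>D. let h = rep D in
              tnm S (HB \<inter> conjs G h K) HB
               (tres S (conjs G h K) (HB \<inter> conjs G h K) (tcj S h K (if lcos G h K \<in> B then e' else t))))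
             (dcosets G HB M K))"
    proof (rule inE_finprod[OF A HB finite_dcosets[OF M] ne_dcosets[OF M]])
      fix D assume D: "D \<in> dcosets G HB M K"
      define h where "h = rep D"
      have hM: "h \<in> M" unfolding h_def by (rule T.rep_dcos[OF HB M K HBM KM D])
      have hc: "h \<in> carrier G" using hM MC by (rule subsetD[rotated])
      define Y where "Y = conjs G h K"
      define W where "W = HB \<inter> Y"
      have Y: "subgroup Y G" unfolding Y_def by (rule T.conjs_subgroup[OF hc K])
      have W: "subgroup W G" unfolding W_def by (rule T.subgroups_Inter_pair[OF HB Y])
      have WY: "W \<subseteq> Y" unfolding W_def by blast
      have WH: "W \<subseteq> HB" unfolding W_def by blast
      have YM: "Y \<subseteq> M" unfolding Y_def by (rule T.conjs_in[OF M hM KM])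
      define w where "w = (if lcos G h K \<in> B then e' else t)"
      have wE: "\<exists>n'. inE A n' K w" unfolding w_def using e' t1 by auto
      then obtain nw where nw: "inE A nw K w" by blast
      have cw: "inE A nw Y (tcj S h K w)" unfolding Y_def by (rule inE_cj[OF A hc nw])
      have cwc: "tcj S h K w \<in> carrier (tlev S Y)" by (rule inE_carrier[OF A cw])
      have fac: "\<exists>n. inE A n HB (tnm S W HB (tres S Y W (tcj S h K w)))"
      proof (cases "HB = M")
        case True
        have WY2: "W = Y" unfolding W_def True using YM by blast
        have r: "tres S Y W (tcj S h K w) = tcj S h K w" unfolding WY2 by (rule S.res_id[OF Y cwc])
        show ?thesis
        proof (cases "lcos G h K \<in> B")
          case True
          have "inE A n Y (tcj S h K w)" unfolding w_def using True inE_cj[OF A hc e'] Y_def by simp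
          then show ?thesis using IHin[OF Y YM] r WY2 \<open>HB = M\<close> by simp
        next
          case False
          have "inE A (Suc 0) Y (tcj S h K w)" unfolding w_def using False inE_cj[OF A hc t1] Y_def by simp
          then show ?thesis using inE_nm_single[OF A M Y YM] r WY2 \<open>HB = M\<close> by simp
        qed
      next
        case False
        obtain m where m: "inE A m W (tres S Y W (tcj S h K w))" using inE_res[OF A W cw WY] by blast
        show ?thesis by (rule IHout[OF HB HBM False W WH m])
      qed
      then show "\<exists>n. inE A n HB (let h = rep D in
              tnm S (HB \<inter> conjs G h K) HB
               (tres S (conjs G h K) (HB \<inter> conjs G h K) (tcj S h K (if lcos G h K \<in> B then e' else t))))"
        unfolding Let_def h_def[symmetric] Y_def[symmetric] W_def[symmetric] w_def[symmetric] .
    qed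
    then obtain n where n: "inE A n HB (finprod (tlev S HB) (\<lambda>D. let h = rep D in
              tnm S (HB \<inter> conjs G h K) HB
               (tres S (conjs G h K) (HB \<inter> conjs G h K) (tcj S h K (if lcos G h K \<in> B then e' else t))))
             (dcosets G HB M K))" by blast
    show "\<exists>n. inE A n M (let B = rep Orb; HB = {h \<in> M. sact G h B = B} in
          ttr S HB M (finprod (tlev S HB) (\<lambda>D. let h = rep D in
              tnm S (HB \<inter> conjs G h K) HB
               (tres S (conjs G h K) (HB \<inter> conjs G h K) (tcj S h K (if lcos G h K \<in> B then e' else t))))
             (dcosets G HB M K)))"
      using inE_tr[OF A M n HBM] unfolding Let_def B_def[symmetric] HB_def[symmetric] by blast
  qed
qed

lemma inE_nm:
  assumes A: "tideal G T A"
  shows "subgroup M G \<Longrightarrow> \<forall>K n e. subgroup K G \<longrightarrow> K \<subseteq> M \<longrightarrow> inE A n K e \<longrightarrow> (\<exists>m. inE A m M (tnm S K M e))"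
proof (induction "card M" arbitrary: M rule: less_induct)
  case less
  note M = less.prems
  have finM: "finite M" using T.fin subgroup.subset[OF M] by (rule finite_subset[rotated])
  have IHout: "\<exists>m. inE A m M' (tnm S K' M' e')"
    if M': "subgroup M' G" and M'M: "M' \<subseteq> M" and ne: "M' \<noteq> M" and K': "subgroup K' G"
      and K'M': "K' \<subseteq> M'" and e': "inE A n' K' e'" for M' K' n' e'
  proof -
    have "M' \<subset> M" using M'M ne by blast
    then have "card M' < card M" by (rule psubset_card_mono[OF finM])
    then have "\<forall>K n e. subgroup K G \<longrightarrow> K \<subseteq> M' \<longrightarrow> inE A n K e \<longrightarrow> (\<exists>m. inE A m M' (tnm S K M' e))"
      using less.hyps M' by blast
    then show ?thesis using K' K'M' e' by blast
  qed
  have main: "\<And>K e. subgroup K G \<Longrightarrow> K \<subseteq> M \<Longrightarrow> inE A n K e \<Longrightarrow> \<exists>m. inE A m M (tnm S K M e)" for n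
  proof (induction n)
    case 0
    have "e = \<zero>\<^bsub>tlev S K\<^esub>" by (rule inE_0D[OF 0(3)])
    then have "tnm S K M e = \<zero>\<^bsub>tlev S M\<^esub>" using S.nm_zero[OF M 0(1,2)] by simp
    then show ?case using inE.zero[where A=A, OF M] by auto
  next
    case (Suc n)
    obtain K0 u a e' where h: "subgroup K0 G" "K0 \<subseteq> K" "u \<in> carrier (tlev S K0)" "a \<in> A K0"
      "inE A n K e'" "e = ttr S K0 K (u \<otimes>\<^bsub>tlev S K0\<^esub> \<phi> K0 a) \<oplus>\<^bsub>tlev S K\<^esub> e'"
      using inE_SucD[OF Suc.prems(3)] by blast
    show ?case unfolding h(6)
      by (rule nm_step[OF A M IHout Suc.IH Suc.prems(1,2) h(1-5)])
  qed
  show ?case using main by blast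
qed

end


context tmorph begin

definition Efam :: "('g set \<Rightarrow> 'a set) \<Rightarrow> 'g set \<Rightarrow> 'b set" where
  "Efam A = (\<lambda>M. if subgroup M G then {e. \<exists>n. inE A n M e} else {})"

lemma Efam_mem: "e \<in> Efam A M \<longleftrightarrow> (\<exists>n. inE A n M e)"
  unfolding Efam_def using inE_sub by auto

lemma Efam_tideal:
  assumes A: "tideal G T A"
  shows "tideal G S (Efam A)"
  unfolding tideal_def
proof (intro conjI allI impI ballI)
  fix H assume "\<not> subgroup H G" then show "Efam A H = {}" unfolding Efam_def by simp
next
  fix H assume H: "subgroup H G"
  interpret SH: cring "tlev S H" by (rule S.lev_cring[OF H])
  show "ideal (Efam A H) (tlev S H)"
  proof (rule idealI[OF SH.ring_axioms])
    show "subgroup (Efam A H) (add_monoid (tlev S H))"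
    proof (rule subgroup.intro)
      show "Efam A H \<subseteq> carrier (add_monoid (tlev S H))"
        using inE_carrier[OF A] by (auto simp: Efam_mem)
      fix x y assume "x \<in> Efam A H" "y \<in> Efam A H"
      then obtain n m where "inE A n H x" "inE A m H y" by (auto simp: Efam_mem)
      then have "inE A (n + m) H (x \<oplus>\<^bsub>tlev S H\<^esub> y)" by (rule inE_add[OF A])
      then show "x \<otimes>\<^bsub>add_monoid (tlev S H)\<^esub> y \<in> Efam A H" by (auto simp: Efam_mem)
    next
      show "\<one>\<^bsub>add_monoid (tlev S H)\<^esub> \<in> Efam A H" using inE.zero[where A=A, OF H] by (auto simp: Efam_mem)
    next
      fix x assume "x \<in> Efam A H"
      then obtain n where n: "inE A n H x" by (auto simp: Efam_mem)
      have xc: "x \<in> carrier (tlev S H)" by (rule inE_carrier[OF A n])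
      have "inE A n H (\<ominus>\<^bsub>tlev S H\<^esub> \<one>\<^bsub>tlev S H\<^esub> \<otimes>\<^bsub>tlev S H\<^esub> x)" by (rule inE_mult[OF A n]) simp
      moreover have "\<ominus>\<^bsub>tlev S H\<^esub> \<one>\<^bsub>tlev S H\<^esub> \<otimes>\<^bsub>tlev S H\<^esub> x = \<ominus>\<^bsub>tlev S H\<^esub> x"
        using xc by (simp add: SH.l_minus)
      ultimately have "inE A n H (\<ominus>\<^bsub>tlev S H\<^esub> x)" by simp
      then show "inv\<^bsub>add_monoid (tlev S H)\<^esub> x \<in> Efam A H" by (auto simp: Efam_mem a_inv_def)
    qed
  next
    fix a x assume "a \<in> Efam A H" "x \<in> carrier (tlev S H)"
    then obtain n where n: "inE A n H a" by (auto simp: Efam_mem)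
    have "inE A n H (x \<otimes>\<^bsub>tlev S H\<^esub> a)" by (rule inE_mult[OF A n \<open>x \<in> carrier (tlev S H)\<close>])
    then show "x \<otimes>\<^bsub>tlev S H\<^esub> a \<in> Efam A H" by (auto simp: Efam_mem)
  next
    fix a x assume "a \<in> Efam A H" "x \<in> carrier (tlev S H)"
    then obtain n where n: "inE A n H a" by (auto simp: Efam_mem)
    have ac: "a \<in> carrier (tlev S H)" by (rule inE_carrier[OF A n])
    have "inE A n H (x \<otimes>\<^bsub>tlev S H\<^esub> a)" by (rule inE_mult[OF A n \<open>x \<in> carrier (tlev S H)\<close>])
    then show "a \<otimes>\<^bsub>tlev S H\<^esub> x \<in> Efam A H" using ac \<open>x \<in> carrier (tlev S H)\<close>
      by (auto simp: Efam_mem SH.m_comm)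
  qed
next
  fix H K assume H: "subgroup H G" and K: "subgroup K G" and KH: "K \<subseteq> H"
  show "tres S H K ` Efam A H \<subseteq> Efam A K"
  proof (rule image_subsetI)
    fix x assume "x \<in> Efam A H"
    then obtain n where n: "inE A n H x" by (auto simp: Efam_mem)
    show "tres S H K x \<in> Efam A K" using inE_res[OF A K n KH] by (auto simp: Efam_mem)
  qed
  show "ttr S K H ` Efam A K \<subseteq> Efam A H"
  proof (rule image_subsetI)
    fix x assume "x \<in> Efam A K"
    then obtain n where n: "inE A n K x" by (auto simp: Efam_mem)
    show "ttr S K H x \<in> Efam A H" using inE_tr[OF A H n KH] by (auto simp: Efam_mem)
  qed
  show "tnm S K H ` Efam A K \<subseteq> Efam A H"
  proof (rule image_subsetI)
    fix x assume "x \<in> Efam A K"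
    then obtain n where n: "inE A n K x" by (auto simp: Efam_mem)
    have "\<forall>K n e. subgroup K G \<longrightarrow> K \<subseteq> H \<longrightarrow> inE A n K e \<longrightarrow> (\<exists>m. inE A m H (tnm S K H e))"
      by (rule inE_nm[OF A H])
    then show "tnm S K H x \<in> Efam A H" using K KH n by (auto simp: Efam_mem)
  qed
next
  fix H g assume H: "subgroup H G" and g: "g \<in> carrier G"
  show "tcj S g H ` Efam A H \<subseteq> Efam A (conjs G g H)"
  proof (rule image_subsetI)
    fix x assume "x \<in> Efam A H"
    then obtain n where n: "inE A n H x" by (auto simp: Efam_mem)
    show "tcj S g H x \<in> Efam A (conjs G g H)" using inE_cj[OF A g n] by (auto simp: Efam_mem)
  qed
qed

lemma tpush_tideal: "tideal G T I \<Longrightarrow> tideal G S (tpush G S \<phi> I)"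
  unfolding tpush_def
proof (rule S.tgen_tideal)
  fix H assume I: "tideal G T I" and H: "subgroup H G"
  show "\<phi> H ` I H \<subseteq> carrier (tlev S H)"
  proof (rule image_subsetI)
    fix x assume "x \<in> I H"
    then have "x \<in> carrier (tlev T H)" using T.tideal_carrier[OF I H] by (rule subsetD[rotated])
    then show "\<phi> H x \<in> carrier (tlev S H)" by (rule phi_closed[OF H])
  qed
qed

lemma tpush_sup: "subgroup H G \<Longrightarrow> x \<in> I H \<Longrightarrow> \<phi> H x \<in> tpush G S \<phi> I H"
  unfolding tpush_def by (rule subsetD[OF S.tgen_sup]) simp_all

lemma tpush_least: "tideal G S J \<Longrightarrow> (\<And>H x. subgroup H G \<Longrightarrow> x \<in> I H \<Longrightarrow> \<phi> H x \<in> J H) \<Longrightarrow> tpush G S \<phi> I \<le> J"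
  unfolding tpush_def by (rule S.tgen_least) blast+

lemma tpush_le_Efam:
  assumes A: "tideal G T A"
  shows "tpush G S \<phi> A \<le> Efam A"
proof (rule tpush_least[OF Efam_tideal[OF A]])
  fix H x assume H: "subgroup H G" and x: "x \<in> A H"
  interpret SH: cring "tlev S H" by (rule S.lev_cring[OF H])
  have xc: "x \<in> carrier (tlev T H)" using x T.tideal_carrier[OF A H] by (rule subsetD[rotated])
  have pc: "\<phi> H x \<in> carrier (tlev S H)" by (rule phi_closed[OF H xc])
  have "inE A 1 H (ttr S H H (\<one>\<^bsub>tlev S H\<^esub> \<otimes>\<^bsub>tlev S H\<^esub> \<phi> H x))"
    by (rule inE_single[OF A H H order_refl _ x]) simp
  moreover have "ttr S H H (\<one>\<^bsub>tlev S H\<^esub> \<otimes>\<^bsub>tlev S H\<^esub> \<phi> H x) = \<phi> H x"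
    using pc S.tr_id[OF H] by simp
  ultimately show "\<phi> H x \<in> Efam A H" by (auto simp: Efam_mem)
qed

end


context tmorph begin

lemma prod_aux:
  assumes A: "tideal G T A" and B: "tideal G T B"
  shows "inE B m M w \<Longrightarrow> s \<in> carrier (tlev S M) \<Longrightarrow> a \<in> A M \<Longrightarrow>
    (s \<otimes>\<^bsub>tlev S M\<^esub> \<phi> M a) \<otimes>\<^bsub>tlev S M\<^esub> w \<in> tpush G S \<phi> (tprod G T A B) M"
proof (induction rule: inE.induct)
  case (zero M)
  interpret SM: cring "tlev S M" by (rule S.lev_cring[OF zero.hyps])
  have Zt: "tideal G S (tpush G S \<phi> (tprod G T A B))" by (rule tpush_tideal[OF T.tprod_tideal[OF A B]])
  have ac: "a \<in> carrier (tlev T M)" using zero.prems(2) T.tideal_carrier[OF A zero.hyps] by (rule subsetD[rotated])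
  have pa: "\<phi> M a \<in> carrier (tlev S M)" by (rule phi_closed[OF zero.hyps ac])
  have "(s \<otimes>\<^bsub>tlev S M\<^esub> \<phi> M a) \<otimes>\<^bsub>tlev S M\<^esub> \<zero>\<^bsub>tlev S M\<^esub> = \<zero>\<^bsub>tlev S M\<^esub>"
    using zero.prems(1) pa by simp
  then show ?case using S.tideal_zero[OF Zt zero.hyps] by simp
next
  case (step M K t b n e)
  note M = step.hyps(1) and K = step.hyps(2) and KM = step.hyps(3) and t = step.hyps(4) and b = step.hyps(5)
  note s = step.prems(1) and a = step.prems(2)
  interpret SM: cring "tlev S M" by (rule S.lev_cring[OF M])
  interpret SK: cring "tlev S K" by (rule S.lev_cring[OF K])
  have Zt: "tideal G S (tpush G S \<phi> (tprod G T A B))" by (rule tpush_tideal[OF T.tprod_tideal[OF A B]])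
  have ac: "a \<in> carrier (tlev T M)" using a T.tideal_carrier[OF A M] by (rule subsetD[rotated])
  have pa: "\<phi> M a \<in> carrier (tlev S M)" by (rule phi_closed[OF M ac])
  have bc: "b \<in> carrier (tlev T K)" using b T.tideal_carrier[OF B K] by (rule subsetD[rotated])
  have pb: "\<phi> K b \<in> carrier (tlev S K)" by (rule phi_closed[OF K bc])
  have x: "s \<otimes>\<^bsub>tlev S M\<^esub> \<phi> M a \<in> carrier (tlev S M)" using s pa by simp
  have y: "t \<otimes>\<^bsub>tlev S K\<^esub> \<phi> K b \<in> carrier (tlev S K)" using t pb by simp
  have c1: "ttr S K M (t \<otimes>\<^bsub>tlev S K\<^esub> \<phi> K b) \<in> carrier (tlev S M)" by (rule S.tr_closed[OF M K KM y])
  have c2: "e \<in> carrier (tlev S M)" by (rule inE_carrier[OF B step.hyps(6)])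
  note r = single_res[OF A M K KM s a]
  have rac: "tres T M K a \<in> carrier (tlev T K)" using r(3) T.tideal_carrier[OF A K] by (rule subsetD[rotated])
  have pra: "\<phi> K (tres T M K a) \<in> carrier (tlev S K)" by (rule phi_closed[OF K rac])
  have "(s \<otimes>\<^bsub>tlev S M\<^esub> \<phi> M a) \<otimes>\<^bsub>tlev S M\<^esub> ttr S K M (t \<otimes>\<^bsub>tlev S K\<^esub> \<phi> K b)
      = ttr S K M (t \<otimes>\<^bsub>tlev S K\<^esub> \<phi> K b) \<otimes>\<^bsub>tlev S M\<^esub> (s \<otimes>\<^bsub>tlev S M\<^esub> \<phi> M a)"
    using x c1 by (rule SM.m_comm)
  also have "\<dots> = ttr S K M ((t \<otimes>\<^bsub>tlev S K\<^esub> \<phi> K b) \<otimes>\<^bsub>tlev S K\<^esub> tres S M K (s \<otimes>\<^bsub>tlev S M\<^esub> \<phi> M a))"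
    by (rule S.frob[OF M K KM y x, symmetric])
  also have "(t \<otimes>\<^bsub>tlev S K\<^esub> \<phi> K b) \<otimes>\<^bsub>tlev S K\<^esub> tres S M K (s \<otimes>\<^bsub>tlev S M\<^esub> \<phi> M a)
      = (t \<otimes>\<^bsub>tlev S K\<^esub> tres S M K s) \<otimes>\<^bsub>tlev S K\<^esub> (\<phi> K (tres T M K a) \<otimes>\<^bsub>tlev S K\<^esub> \<phi> K b)"
    unfolding r(1) using t pb r(2) pra by (simp add: SK.m_ac)
  also have "\<phi> K (tres T M K a) \<otimes>\<^bsub>tlev S K\<^esub> \<phi> K b = \<phi> K (tres T M K a \<otimes>\<^bsub>tlev T K\<^esub> b)"
    by (rule phi_mult[OF K rac bc, symmetric])
  finally have eq: "(s \<otimes>\<^bsub>tlev S M\<^esub> \<phi> M a) \<otimes>\<^bsub>tlev S M\<^esub> ttr S K M (t \<otimes>\<^bsub>tlev S K\<^esub> \<phi> K b)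
     = ttr S K M ((t \<otimes>\<^bsub>tlev S K\<^esub> tres S M K s) \<otimes>\<^bsub>tlev S K\<^esub> \<phi> K (tres T M K a \<otimes>\<^bsub>tlev T K\<^esub> b))" .
  have "tres T M K a \<otimes>\<^bsub>tlev T K\<^esub> b \<in> tprod G T A B K" by (rule T.tprod_gen[where I=A and J=B, OF K r(3) b])
  then have "\<phi> K (tres T M K a \<otimes>\<^bsub>tlev T K\<^esub> b) \<in> tpush G S \<phi> (tprod G T A B) K" by (rule tpush_sup[OF K])
  then have "(t \<otimes>\<^bsub>tlev S K\<^esub> tres S M K s) \<otimes>\<^bsub>tlev S K\<^esub> \<phi> K (tres T M K a \<otimes>\<^bsub>tlev T K\<^esub> b) \<in> tpush G S \<phi> (tprod G T A B) K"
    by (rule S.tideal_mult_l[OF Zt K]) (use t r(2) in simp)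
  then have i1: "(s \<otimes>\<^bsub>tlev S M\<^esub> \<phi> M a) \<otimes>\<^bsub>tlev S M\<^esub> ttr S K M (t \<otimes>\<^bsub>tlev S K\<^esub> \<phi> K b) \<in> tpush G S \<phi> (tprod G T A B) M"
    unfolding eq by (rule S.tideal_tr[OF Zt M K KM])
  have i2: "(s \<otimes>\<^bsub>tlev S M\<^esub> \<phi> M a) \<otimes>\<^bsub>tlev S M\<^esub> e \<in> tpush G S \<phi> (tprod G T A B) M"
    by (rule step.IH[OF s a])
  have "(s \<otimes>\<^bsub>tlev S M\<^esub> \<phi> M a) \<otimes>\<^bsub>tlev S M\<^esub> (ttr S K M (t \<otimes>\<^bsub>tlev S K\<^esub> \<phi> K b) \<oplus>\<^bsub>tlev S M\<^esub> e)
     = (s \<otimes>\<^bsub>tlev S M\<^esub> \<phi> M a) \<otimes>\<^bsub>tlev S M\<^esub> ttr S K M (t \<otimes>\<^bsub>tlev S K\<^esub> \<phi> K b) \<oplus>\<^bsub>tlev S M\<^esub> (s \<otimes>\<^bsub>tlev S M\<^esub> \<phi> M a) \<otimes>\<^bsub>tlev S M\<^esub> e"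
    using c1 c2 x by (rule SM.r_distr)
  then show ?case using S.tideal_add[OF Zt M i1 i2] by simp
qed

lemma prod_main:
  assumes A: "tideal G T A" and B: "tideal G T B"
  shows "inE A n L u \<Longrightarrow> v \<in> Efam B L \<Longrightarrow> u \<otimes>\<^bsub>tlev S L\<^esub> v \<in> tpush G S \<phi> (tprod G T A B) L"
proof (induction rule: inE.induct)
  case (zero M)
  interpret SM: cring "tlev S M" by (rule S.lev_cring[OF zero.hyps])
  have Zt: "tideal G S (tpush G S \<phi> (tprod G T A B))" by (rule tpush_tideal[OF T.tprod_tideal[OF A B]])
  obtain m where "inE B m M v" using zero.prems by (auto simp: Efam_mem)
  then have "v \<in> carrier (tlev S M)" by (rule inE_carrier[OF B])
  then have "\<zero>\<^bsub>tlev S M\<^esub> \<otimes>\<^bsub>tlev S M\<^esub> v = \<zero>\<^bsub>tlev S M\<^esub>" by simp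
  then show ?case using S.tideal_zero[OF Zt zero.hyps] by simp
next
  case (step M K s a n e)
  note M = step.hyps(1) and K = step.hyps(2) and KM = step.hyps(3) and s = step.hyps(4) and a = step.hyps(5)
  interpret SM: cring "tlev S M" by (rule S.lev_cring[OF M])
  interpret SK: cring "tlev S K" by (rule S.lev_cring[OF K])
  have Zt: "tideal G S (tpush G S \<phi> (tprod G T A B))" by (rule tpush_tideal[OF T.tprod_tideal[OF A B]])
  obtain m where vm: "inE B m M v" using step.prems by (auto simp: Efam_mem)
  have vc: "v \<in> carrier (tlev S M)" by (rule inE_carrier[OF B vm])
  have ac: "a \<in> carrier (tlev T K)" using a T.tideal_carrier[OF A K] by (rule subsetD[rotated])
  have pa: "\<phi> K a \<in> carrier (tlev S K)" by (rule phi_closed[OF K ac])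
  have x: "s \<otimes>\<^bsub>tlev S K\<^esub> \<phi> K a \<in> carrier (tlev S K)" using s pa by simp
  have c1: "ttr S K M (s \<otimes>\<^bsub>tlev S K\<^esub> \<phi> K a) \<in> carrier (tlev S M)" by (rule S.tr_closed[OF M K KM x])
  have c2: "e \<in> carrier (tlev S M)" by (rule inE_carrier[OF A step.hyps(6)])
  obtain m' where rv: "inE B m' K (tres S M K v)" using inE_res[OF B K vm KM] by blast
  have "(s \<otimes>\<^bsub>tlev S K\<^esub> \<phi> K a) \<otimes>\<^bsub>tlev S K\<^esub> tres S M K v \<in> tpush G S \<phi> (tprod G T A B) K"
    by (rule prod_aux[OF A B rv s a])
  then have "ttr S K M ((s \<otimes>\<^bsub>tlev S K\<^esub> \<phi> K a) \<otimes>\<^bsub>tlev S K\<^esub> tres S M K v) \<in> tpush G S \<phi> (tprod G T A B) M"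
    by (rule S.tideal_tr[OF Zt M K KM])
  then have i1: "ttr S K M (s \<otimes>\<^bsub>tlev S K\<^esub> \<phi> K a) \<otimes>\<^bsub>tlev S M\<^esub> v \<in> tpush G S \<phi> (tprod G T A B) M"
    unfolding S.frob[OF M K KM x vc] .
  have i2: "e \<otimes>\<^bsub>tlev S M\<^esub> v \<in> tpush G S \<phi> (tprod G T A B) M" by (rule step.IH[OF step.prems])
  have "(ttr S K M (s \<otimes>\<^bsub>tlev S K\<^esub> \<phi> K a) \<oplus>\<^bsub>tlev S M\<^esub> e) \<otimes>\<^bsub>tlev S M\<^esub> v
     = ttr S K M (s \<otimes>\<^bsub>tlev S K\<^esub> \<phi> K a) \<otimes>\<^bsub>tlev S M\<^esub> v \<oplus>\<^bsub>tlev S M\<^esub> e \<otimes>\<^bsub>tlev S M\<^esub> v"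
    using c1 c2 vc by (rule SM.l_distr)
  then show ?case using S.tideal_add[OF Zt M i1 i2] by simp
qed

lemma push_prod:
  assumes A: "tideal G T A" and B: "tideal G T B"
  shows "tprod G S (tpush G S \<phi> A) (tpush G S \<phi> B) \<le> tpush G S \<phi> (tprod G T A B)"
  unfolding tprod_def[where T=S]
proof (rule S.tgen_least[OF tpush_tideal[OF T.tprod_tideal[OF A B]]])
  fix H assume H: "subgroup H G"
  show "{x \<otimes>\<^bsub>tlev S H\<^esub> y |x y. x \<in> tpush G S \<phi> A H \<and> y \<in> tpush G S \<phi> B H} \<subseteq> tpush G S \<phi> (tprod G T A B) H"
  proof
    fix z assume "z \<in> {x \<otimes>\<^bsub>tlev S H\<^esub> y |x y. x \<in> tpush G S \<phi> A H \<and> y \<in> tpush G S \<phi> B H}"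
    then obtain x y where z: "z = x \<otimes>\<^bsub>tlev S H\<^esub> y" "x \<in> tpush G S \<phi> A H" "y \<in> tpush G S \<phi> B H" by blast
    have "x \<in> Efam A H" using z(2) tpush_le_Efam[OF A] by (auto simp: le_fun_def)
    then obtain n where n: "inE A n H x" by (auto simp: Efam_mem)
    have "y \<in> Efam B H" using z(3) tpush_le_Efam[OF B] by (auto simp: le_fun_def)
    then show "z \<in> tpush G S \<phi> (tprod G T A B) H" unfolding z(1) by (rule prod_main[OF A B n])
  qed
qed

end


context tmorph begin

definition Pre :: "('g set \<Rightarrow> 'b set) \<Rightarrow> 'g set \<Rightarrow> 'a set" where
  "Pre Q = (\<lambda>H. if subgroup H G then {x \<in> carrier (tlev T H). \<phi> H x \<in> Q H} else {})"

lemma Pre_mem: "x \<in> Pre Q H \<longleftrightarrow> subgroup H G \<and> x \<in> carrier (tlev T H) \<and> \<phi> H x \<in> Q H"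
  unfolding Pre_def by auto

lemma Pre_tideal:
  assumes Q: "tideal G S Q"
  shows "tideal G T (Pre Q)"
  unfolding tideal_def
proof (intro conjI allI impI ballI)
  fix H assume "\<not> subgroup H G" then show "Pre Q H = {}" unfolding Pre_def by simp
next
  fix H assume H: "subgroup H G"
  have "ideal {r \<in> carrier (tlev T H). \<phi> H r \<in> Q H} (tlev T H)"
    by (rule ring_hom_ring.ideal_vimage[OF ring_hom_ringI2[OF T.lev_ring[OF H] S.lev_ring[OF H] phi_hom[OF H]] S.tideal_ideal[OF Q H]])
  then show "ideal (Pre Q H) (tlev T H)" unfolding Pre_def using H by simp
next
  fix H K assume H: "subgroup H G" and K: "subgroup K G" and KH: "K \<subseteq> H"
  show "tres T H K ` Pre Q H \<subseteq> Pre Q K"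
  proof (rule image_subsetI)
    fix x assume "x \<in> Pre Q H"
    then have xc: "x \<in> carrier (tlev T H)" and xq: "\<phi> H x \<in> Q H" by (simp_all add: Pre_mem)
    have "tres T H K x \<in> carrier (tlev T K)" by (rule T.res_closed[OF H K KH xc])
    moreover have "\<phi> K (tres T H K x) \<in> Q K" unfolding phi_res[OF H K KH xc] by (rule S.tideal_res[OF Q H K KH xq])
    ultimately show "tres T H K x \<in> Pre Q K" using K by (simp add: Pre_mem)
  qed
  show "ttr T K H ` Pre Q K \<subseteq> Pre Q H"
  proof (rule image_subsetI)
    fix x assume "x \<in> Pre Q K"
    then have xc: "x \<in> carrier (tlev T K)" and xq: "\<phi> K x \<in> Q K" by (simp_all add: Pre_mem)
    have "ttr T K H x \<in> carrier (tlev T H)" by (rule T.tr_closed[OF H K KH xc])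
    moreover have "\<phi> H (ttr T K H x) \<in> Q H" unfolding phi_tr[OF H K KH xc] by (rule S.tideal_tr[OF Q H K KH xq])
    ultimately show "ttr T K H x \<in> Pre Q H" using H by (simp add: Pre_mem)
  qed
  show "tnm T K H ` Pre Q K \<subseteq> Pre Q H"
  proof (rule image_subsetI)
    fix x assume "x \<in> Pre Q K"
    then have xc: "x \<in> carrier (tlev T K)" and xq: "\<phi> K x \<in> Q K" by (simp_all add: Pre_mem)
    have "tnm T K H x \<in> carrier (tlev T H)" by (rule T.nm_closed[OF H K KH xc])
    moreover have "\<phi> H (tnm T K H x) \<in> Q H" unfolding phi_nm[OF H K KH xc] by (rule S.tideal_nm[OF Q H K KH xq])
    ultimately show "tnm T K H x \<in> Pre Q H" using H by (simp add: Pre_mem)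
  qed
next
  fix H g assume H: "subgroup H G" and g: "g \<in> carrier G"
  show "tcj T g H ` Pre Q H \<subseteq> Pre Q (conjs G g H)"
  proof (rule image_subsetI)
    fix x assume "x \<in> Pre Q H"
    then have xc: "x \<in> carrier (tlev T H)" and xq: "\<phi> H x \<in> Q H" by (simp_all add: Pre_mem)
    have "tcj T g H x \<in> carrier (tlev T (conjs G g H))" by (rule T.cj_closed[OF g H xc])
    moreover have "\<phi> (conjs G g H) (tcj T g H x) \<in> Q (conjs G g H)"
      unfolding phi_cj[OF H g xc] by (rule S.tideal_cj[OF Q H g xq])
    ultimately show "tcj T g H x \<in> Pre Q (conjs G g H)" using T.conjs_subgroup[OF g H] by (simp add: Pre_mem)
  qed
qed

lemma Pre_push:
  assumes Q: "tideal G S Q" and le: "I \<le> Pre Q"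
  shows "tpush G S \<phi> I \<le> Q"
proof (rule tpush_least[OF Q])
  fix H x assume "subgroup H G" "x \<in> I H"
  then have "x \<in> Pre Q H" using le by (auto simp: le_fun_def)
  then show "\<phi> H x \<in> Q H" by (simp add: Pre_mem)
qed

lemma push_unit: "tunit G S \<le> tpush G S \<phi> (tunit G T)"
proof (rule le_funI, rule subsetI)
  fix H y assume y: "y \<in> tunit G S H"
  then have H: "subgroup H G" and yc: "y \<in> carrier (tlev S H)" by (auto simp: tunit_def split: if_splits)
  interpret SH: cring "tlev S H" by (rule S.lev_cring[OF H])
  interpret TH: cring "tlev T H" by (rule T.lev_cring[OF H])
  have "\<one>\<^bsub>tlev T H\<^esub> \<in> tunit G T H" using H by (simp add: tunit_def)
  then have "\<phi> H \<one>\<^bsub>tlev T H\<^esub> \<in> tpush G S \<phi> (tunit G T) H" by (rule tpush_sup[OF H])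
  then have "\<one>\<^bsub>tlev S H\<^esub> \<in> tpush G S \<phi> (tunit G T) H" unfolding phi_one[OF H] .
  then have "y \<otimes>\<^bsub>tlev S H\<^esub> \<one>\<^bsub>tlev S H\<^esub> \<in> tpush G S \<phi> (tunit G T) H"
    by (rule S.tideal_mult_l[OF tpush_tideal[OF T.tunit_tideal] H _ yc])
  then show "y \<in> tpush G S \<phi> (tunit G T) H" using yc by simp
qed

lemma push_pow:
  assumes A: "tideal G T A"
  shows "tpow G S (tpush G S \<phi> A) n \<le> tpush G S \<phi> (tpow G T A n)"
proof (induction n)
  case 0 then show ?case using push_unit by simp
next
  case (Suc n)
  have "tpow G S (tpush G S \<phi> A) (Suc n) = tprod G S (tpow G S (tpush G S \<phi> A) n) (tpush G S \<phi> A)" by simp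
  also have "\<dots> \<le> tprod G S (tpush G S \<phi> (tpow G T A n)) (tpush G S \<phi> A)"
    by (rule S.tprod_mono[OF Suc.IH order_refl])
  also have "\<dots> \<le> tpush G S \<phi> (tprod G T (tpow G T A n) A)"
    by (rule push_prod[OF T.tpow_tideal[OF A] A])
  finally show ?case by simp
qed

lemma Pre_rad:
  assumes Q: "tprime G S Q"
  shows "trad G T (Pre Q) \<le> Pre Q"
proof (rule le_funI, rule subsetI)
  have Qt: "tideal G S Q" by (rule S.tprime_tideal[OF Q])
  fix H x assume "x \<in> trad G T (Pre Q) H"
  then have H: "subgroup H G" and xc: "x \<in> carrier (tlev T H)"
    and n: "\<exists>n\<ge>1. tpow G T (tgen1 G T H x) n \<le> Pre Q"
    unfolding trad_def by (auto split: if_splits)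
  then obtain n where n: "tpow G T (tgen1 G T H x) n \<le> Pre Q" by blast
  define A0 where "A0 = tgen1 G T H x"
  have A0: "tideal G T A0" unfolding A0_def by (rule T.tgen1_tideal[OF H xc])
  have "tpow G S (tpush G S \<phi> A0) n \<le> tpush G S \<phi> (tpow G T A0 n)" by (rule push_pow[OF A0])
  also have "\<dots> \<le> Q" by (rule Pre_push[OF Qt n[folded A0_def]])
  finally have p1: "tpow G S (tpush G S \<phi> A0) n \<le> Q" .
  have pxc: "\<phi> H x \<in> carrier (tlev S H)" by (rule phi_closed[OF H xc])
  have "\<phi> H x \<in> tpush G S \<phi> A0 H" unfolding A0_def by (rule tpush_sup[where I="tgen1 G T H x", OF H T.tgen1_mem[where x=x, OF H]])
  then have "tgen1 G S H (\<phi> H x) \<le> tpush G S \<phi> A0" by (rule S.tgen1_le[OF tpush_tideal[OF A0]])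
  then have "tpow G S (tgen1 G S H (\<phi> H x)) n \<le> tpow G S (tpush G S \<phi> A0) n" by (rule S.tpow_mono)
  then have "tpow G S (tgen1 G S H (\<phi> H x)) n \<le> Q" using p1 by (rule order_trans)
  then have "tgen1 G S H (\<phi> H x) \<le> Q" by (rule S.tpow_prime[OF Q S.tgen1_tideal[OF H pxc]])
  then have "\<phi> H x \<in> Q H" using S.tgen1_mem[OF H] by (auto simp: le_fun_def)
  then show "x \<in> Pre Q H" using H xc by (simp add: Pre_mem)
qed

lemma spec_eq:
  assumes Q: "tprime G S Q"
  shows "spec_map G T S \<phi> Q =
           (\<lambda>H. if subgroup H G then {x \<in> carrier (tlev T H). \<phi> H x \<in> Q H} else {})"
proof -
  have Qt: "tideal G S Q" by (rule S.tprime_tideal[OF Q])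
  define P where "P = Pre Q"
  have Pt: "tideal G T P" unfolding P_def by (rule Pre_tideal[OF Qt])
  have Prad: "trad G T P = P"
    by (rule antisym) (simp_all add: P_def Pre_rad[OF Q] T.le_trad[OF Pt[unfolded P_def]])
  define \<I> where "\<I> = {I \<in> radid G T. fpoint Q (ttilde G S \<phi> I) = 0}"
  have key1: "I \<le> P" if I: "I \<in> \<I>" for I
  proof -
    have It: "tideal G T I" using I unfolding \<I>_def radid_def by blast
    have "fpoint Q (ttilde G S \<phi> I) = 0" using I unfolding \<I>_def by blast
    then have tq: "trad G S (tpush G S \<phi> I) \<le> Q" unfolding fpoint_def ttilde_def by (simp split: if_splits)
    have "tpush G S \<phi> I \<le> trad G S (tpush G S \<phi> I)" by (rule S.le_trad[OF tpush_tideal[OF It]])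
    then have pq: "tpush G S \<phi> I \<le> Q" using tq by (rule order_trans)
    show "I \<le> P"
    proof (rule le_funI, rule subsetI)
      fix H x assume x: "x \<in> I H"
      show "x \<in> P H"
      proof (cases "subgroup H G")
        case False then show ?thesis using x T.tideal_off[OF It] by simp
      next
        case H: True
        have xc: "x \<in> carrier (tlev T H)" using x T.tideal_carrier[OF It H] by (rule subsetD[rotated])
        have "\<phi> H x \<in> tpush G S \<phi> I H" by (rule tpush_sup[where I=I, OF H x])
        then have "\<phi> H x \<in> Q H" using pq by (auto simp: le_fun_def)
        then show ?thesis unfolding P_def using H xc by (simp add: Pre_mem)
      qed
    qed
  qed
  have key2: "P \<in> \<I>"
  proof -
    have "P \<in> radid G T" unfolding radid_def using Pt Prad by simp
    moreover have "ttilde G S \<phi> P \<le> Q"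
    proof -
      have "tpush G S \<phi> P \<le> Q" unfolding P_def by (rule Pre_push[OF Qt order_refl])
      then have "trad G S (tpush G S \<phi> P) \<le> trad G S Q" by (rule S.trad_mono)
      also have "\<dots> \<le> Q" by (rule S.prime_rad[OF Q])
      finally show ?thesis unfolding ttilde_def .
    qed
    ultimately show ?thesis unfolding \<I>_def fpoint_def by simp
  qed
  have U: "(\<lambda>H. \<Union>I\<in>\<I>. I H) = P"
  proof (rule ext, rule equalityI)
    fix H show "(\<Union>I\<in>\<I>. I H) \<subseteq> P H" using key1 by (auto simp: le_fun_def)
    show "P H \<subseteq> (\<Union>I\<in>\<I>. I H)" using key2 by blast
  qed
  have "spec_map G T S \<phi> Q = trad G T (tgen G T (\<lambda>H. \<Union>I\<in>\<I>. I H))"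
    unfolding spec_map_def prime_of_point_def tjoin_def \<I>_def by simp
  also have "\<dots> = P" unfolding U T.tgen_id[OF Pt] Prad ..
  finally show ?thesis unfolding P_def Pre_def .
qed

end

theorem proposition6p13:
  fixes G :: "'g monoid" and T :: "('g, 'a) tambara" and S :: "('g, 'b) tambara"
    and \<phi> :: "'g set \<Rightarrow> 'a \<Rightarrow> 'b" and Q :: "'g set \<Rightarrow> 'b set"
  assumes "group G" and "finite (carrier G)"
    and "tambara G T" and "tambara G S" and "tmor G T S \<phi>"
    and "tprime G S Q"
  shows "spec_map G T S \<phi> Q =
           (\<lambda>H. if subgroup H G then {x \<in> carrier (tlev T H). \<phi> H x \<in> Q H} else {})"
proof -
  have "tmorph G T S \<phi>"
    unfolding tmorph_def tamb_def tamb_axioms_def tmorph_axioms_def using assms by blast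
  then show ?thesis by (rule tmorph.spec_eq[OF _ assms(6)])
qed

end
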